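(* Let $\textnormal{R}\in\{\textnormal{ML},\textnormal{wML},\textnormal{C},\textnormal{S},\textnormal{CH},\textnormal{wCH}\}$ and let $\omega\in\Omega$ be a path that is $\textnormal{R}$-random for a computable forecasting system $\varphi$. Then $I_\textnormal{R}(\omega)\subseteq I_\varphi(\omega)$, where $I_\varphi(\omega)=\big[\liminf_{n\to\infty}\underline{\varphi}(\omega_{1:n}),\ \limsup_{n\to\infty}\overline{\varphi}(\omega_{1:n})\big]$.
   Context: $\mathcal{X}=\{0,1\}$; $\Omega=\mathcal{X}^{\mathbb{N}}$ (paths); $\mathbb{S}=\bigcup_{n\geq0}\mathcal{X}^n$ (situations), $\square$ empty string, $|s|$ length, $\omega_{1:n}=(\omega_1,\dots,\omega_n)$, $\omega_{1:0}=\square$. $\mathcal{I}$: nonempty closed intervals $I\subseteq[0,1]$. A forecasting system is a map $\varphi:\mathbb{S}\to\mathcal{I}$, $\underline{\varphi}=\min\varphi$, $\overline{\varphi}=\max\varphi$; an interval forecast $I$ is identified with the constant forecasting system $s\mapsto I$. A real map $r$ on a countable effectively encoded set $\mathcal D$ is computable if there is a recursive $q:\mathcal{D}\times\mathbb{N}_0\to\mathbb{Q}$ with $|r(d)-q(d,n)|<2^{-n}$; lower semicomputable if there is a recursive $q$ with $q(d,n+1)\ge q(d,n)$ and $r(d)=\lim_nq(d,n)$. $\varphi$ computable if $\underline\varphi,\overline\varphi$ are. $\overline{E}_I(f)=\max_{p\in I}[pf(1)+(1-p)f(0)]$. A real process $F:\mathbb S\to\mathbb R$ is a supermartingale for $\varphi$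 if $\overline{E}_{\varphi(s)}(F(s\,\cdot)-F(s))\le0$ for all $s$; a test supermartingale if also $F\ge0$, $F(\square)=1$. A multiplier process $D$ maps situations to gambles $\mathcal X\to\mathbb R$, generating $D^{\circledcirc}(x_1,\dots,x_n)=\prod_{k=0}^{n-1}D(x_{1:k})(x_{k+1})$; lower semicomputable if $(s,x)\mapsto D(s)(x)$ is. For path $\omega$ and forecasting system $\varphi$: ML-random if no lower semicomputable test supermartingale $T$ for $\varphi$ has $\limsup_nT(\omega_{1:n})=\infty$; wML-random if no test supermartingale for $\varphi$ of the form $D^{\circledcirc}$, $D$ lower semicomputable, has this; C-random if no computable test supermartingale for $\varphi$ has this; S-random if there is no computable test supermartingale $T$ for $\varphi$ and computable non-decreasing unbounded $\tau:\mathbb N_0\to\mathbb R_{\ge0}$ with $\limsup_n[T(\omega_{1:n})-\tau(n)]\ge0$; CH-random (resp. wCH-random) if for every recursive (resp. recursive and temporal, i.e. depending only on $|s|$) $S:\mathbb S\to\{0,1\}$ with $\sum_{k=0}^{n-1}S(\omega_{1:k})\to\infty$: $\liminf_n \frac{\sum_{k<n}S(\omega_{1:k})[\omega_{k+1}-\underline\varphi(\omega_{1:k})]}{\sum_{k<n}S(\omega_{1:k})}\ge0$ and $\limsup_n \frac{\sum_{k<n}S(\omega_{1:k})[\omega_{k+1}-\overline\varphi(\omega_{1:k})]}{\sum_{k<n}S(\omega_{1:k})}\le0$. $\mathcal I_\textnormal{R}(\omega)=\{I\in\mathcal I:\omega\text{ R-random for }I\}$, $I_\textnormal{R}(\omega)=\bigcap_{I\in\mathcal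 I_\textnormal{R}(\omega)}I$. *)

theory Defs
  imports "HOL-Analysis.Analysis" "HOL-Library.Nat_Bijection"
begin

datatype rf = Zr | Sc | Pj nat | Cn rf "rf list" | Pr rf rf | Mn rf

inductive rf_eval :: "rf \<Rightarrow> nat list \<Rightarrow> nat \<Rightarrow> bool" where
  zero: "rf_eval Zr xs 0"
| succ: "rf_eval Sc (x # xs) (Suc x)"
| proj: "i < length xs \<Longrightarrow> rf_eval (Pj i) xs (xs ! i)"
| comp: "list_all2 (\<lambda>g y. rf_eval g xs y) gs ys \<Longrightarrow> rf_eval f ys z \<Longrightarrow> rf_eval (Cn f gs) xs z"
| prim0: "rf_eval f xs z \<Longrightarrow> rf_eval (Pr f g) (0 # xs) z"
| primS: "rf_eval (Pr f g) (n # xs) y \<Longrightarrow> rf_eval g (y # n # xs) z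
           \<Longrightarrow> rf_eval (Pr f g) (Suc n # xs) z"
| mu: "rf_eval f (n # xs) 0 \<Longrightarrow> (\<forall>m<n. \<exists>k. rf_eval f (m # xs) (Suc k))
           \<Longrightarrow> rf_eval (Mn f) xs n"

definition recursive_fn :: "(nat \<Rightarrow> nat) \<Rightarrow> bool" where
  "recursive_fn f \<longleftrightarrow> (\<exists>p. \<forall>x. rf_eval p [x] (f x))"

text \<open>Binary strings: situations are bool lists, True = 1, False = 0.\<close>
definition enc_sit :: "bool list \<Rightarrow> nat" where
  "enc_sit s = list_encode (map of_bool s)"

definition enc_rat :: "rat \<Rightarrow> nat" where
  "enc_rat q = prod_encode (int_encode (fst (quotient_of q)), nat (snd (quotient_of q)))"

definition recursive_rat_map :: "('d \<Rightarrow> nat) \<Rightarrow> ('d \<Rightarrow> nat \<Rightarrow> rat) \<Rightarrow> bool" where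
  "recursive_rat_map enc q \<longleftrightarrow>
     (\<exists>g. recursive_fn g \<and> (\<forall>d n. g (prod_encode (enc d, n)) = enc_rat (q d n)))"

definition computable_real :: "('d \<Rightarrow> nat) \<Rightarrow> ('d \<Rightarrow> real) \<Rightarrow> bool" where
  "computable_real enc r \<longleftrightarrow>
     (\<exists>q. recursive_rat_map enc q \<and> (\<forall>d n. \<bar>r d - of_rat (q d n)\<bar> < (1/2) ^ n))"

definition lsc_real :: "('d \<Rightarrow> nat) \<Rightarrow> ('d \<Rightarrow> real) \<Rightarrow> bool" where
  "lsc_real enc r \<longleftrightarrow>
     (\<exists>q. recursive_rat_map enc q \<and> (\<forall>d n. q d (Suc n) \<ge> q d n)
          \<and> (\<forall>d. (\<lambda>n. real_of_rat (q d n)) \<longlonglongrightarrow> r d))"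

definition enc_sx :: "bool list \<times> bool \<Rightarrow> nat" where
  "enc_sx sx = prod_encode (enc_sit (fst sx), of_bool (snd sx))"

definition intervals :: "real set set" where
  "intervals = {{a..b} | a b. 0 \<le> a \<and> a \<le> b \<and> b \<le> 1}"

definition forecasting_system :: "(bool list \<Rightarrow> real set) \<Rightarrow> bool" where
  "forecasting_system \<phi> \<longleftrightarrow> (\<forall>s. \<phi> s \<in> intervals)"

definition lower_fc :: "(bool list \<Rightarrow> real set) \<Rightarrow> bool list \<Rightarrow> real" where
  "lower_fc \<phi> s = Inf (\<phi> s)"

definition upper_fc :: "(bool list \<Rightarrow> real set) \<Rightarrow> bool list \<Rightarrow> real" where
  "upper_fc \<phi> s = Sup (\<phi> s)"

definition computable_fs :: "(bool list \<Rightarrow> real set) \<Rightarrow> bool" where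
  "computable_fs \<phi> \<longleftrightarrow> computable_real enc_sit (lower_fc \<phi>) \<and> computable_real enc_sit (upper_fc \<phi>)"

text \<open>Upper expectation of a gamble f on X = {0,1} (False = 0, True = 1) w.r.t. interval I.\<close>
definition upper_exp :: "real set \<Rightarrow> (bool \<Rightarrow> real) \<Rightarrow> real" where
  "upper_exp I f = Sup ((\<lambda>p. p * f True + (1 - p) * f False) ` I)"

definition supermartingale :: "(bool list \<Rightarrow> real set) \<Rightarrow> (bool list \<Rightarrow> real) \<Rightarrow> bool" where
  "supermartingale \<phi> F \<longleftrightarrow> (\<forall>s. upper_exp (\<phi> s) (\<lambda>x. F (s @ [x]) - F s) \<le> 0)"

definition test_supermartingale :: "(bool list \<Rightarrow> real set) \<Rightarrow> (bool list \<Rightarrow> real) \<Rightarrow> bool" where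
  "test_supermartingale \<phi> T \<longleftrightarrow> supermartingale \<phi> T \<and> (\<forall>s. T s \<ge> 0) \<and> T [] = 1"

definition mult_proc :: "(bool list \<Rightarrow> bool \<Rightarrow> real) \<Rightarrow> bool list \<Rightarrow> real" where
  "mult_proc D s = (\<Prod>k<length s. D (take k s) (s ! k))"

text \<open>omega_{1:n}; paths are indexed from 0, so omega 0 is omega_1.\<close>
definition pre :: "(nat \<Rightarrow> bool) \<Rightarrow> nat \<Rightarrow> bool list" where
  "pre \<omega> n = map \<omega> [0..<n]"

definition unbounded_on :: "(bool list \<Rightarrow> real) \<Rightarrow> (nat \<Rightarrow> bool) \<Rightarrow> bool" where
  "unbounded_on T \<omega> \<longleftrightarrow> limsup (\<lambda>n. ereal (T (pre \<omega> n))) = \<infinity>"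

datatype rnotion = R_ML | R_wML | R_C | R_S | R_CH | R_wCH

definition recursive_selection :: "(bool list \<Rightarrow> bool) \<Rightarrow> bool" where
  "recursive_selection Sel \<longleftrightarrow> (\<exists>g. recursive_fn g \<and> (\<forall>s. g (enc_sit s) = of_bool (Sel s)))"

definition temporal :: "(bool list \<Rightarrow> bool) \<Rightarrow> bool" where
  "temporal Sel \<longleftrightarrow> (\<forall>s t. length s = length t \<longrightarrow> Sel s = Sel t)"

definition sel_count :: "(bool list \<Rightarrow> bool) \<Rightarrow> (nat \<Rightarrow> bool) \<Rightarrow> nat \<Rightarrow> real" where
  "sel_count Sel \<omega> n = (\<Sum>k<n. of_bool (Sel (pre \<omega> k)))"

definition CH_condition :: "(bool list \<Rightarrow> real set) \<Rightarrow> (nat \<Rightarrow> bool) \<Rightarrow> (bool list \<Rightarrow> bool) \<Rightarrow> bool" where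
  "CH_condition \<phi> \<omega> Sel \<longleftrightarrow>
     (filterlim (sel_count Sel \<omega>) at_top sequentially \<longrightarrow>
       liminf (\<lambda>n. ereal ((\<Sum>k<n. of_bool (Sel (pre \<omega> k)) *
                  (of_bool (\<omega> k) - lower_fc \<phi> (pre \<omega> k))) / sel_count Sel \<omega> n)) \<ge> 0
     \<and> limsup (\<lambda>n. ereal ((\<Sum>k<n. of_bool (Sel (pre \<omega> k)) *
                  (of_bool (\<omega> k) - upper_fc \<phi> (pre \<omega> k))) / sel_count Sel \<omega> n)) \<le> 0)"

fun random :: "rnotion \<Rightarrow> (bool list \<Rightarrow> real set) \<Rightarrow> (nat \<Rightarrow> bool) \<Rightarrow> bool" where
  "random R_ML \<phi> \<omega> \<longleftrightarrow>
     \<not> (\<exists>T. lsc_real enc_sit T \<and> test_supermartingale \<phi> T \<and> unbounded_on T \<omega>)"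
| "random R_wML \<phi> \<omega> \<longleftrightarrow>
     \<not> (\<exists>D. lsc_real enc_sx (\<lambda>(s, x). D s x) \<and> test_supermartingale \<phi> (mult_proc D)
           \<and> unbounded_on (mult_proc D) \<omega>)"
| "random R_C \<phi> \<omega> \<longleftrightarrow>
     \<not> (\<exists>T. computable_real enc_sit T \<and> test_supermartingale \<phi> T \<and> unbounded_on T \<omega>)"
| "random R_S \<phi> \<omega> \<longleftrightarrow>
     \<not> (\<exists>T \<tau>. computable_real enc_sit T \<and> test_supermartingale \<phi> T
           \<and> computable_real id \<tau> \<and> mono \<tau> \<and> (\<forall>n. \<tau> n \<ge> 0) \<and> \<not> bdd_above (range \<tau>)
           \<and> limsup (\<lambda>n. ereal (T (pre \<omega> n) - \<tau> n)) \<ge> 0)"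
| "random R_CH \<phi> \<omega> \<longleftrightarrow>
     (\<forall>Sel. recursive_selection Sel \<longrightarrow> CH_condition \<phi> \<omega> Sel)"
| "random R_wCH \<phi> \<omega> \<longleftrightarrow>
     (\<forall>Sel. recursive_selection Sel \<and> temporal Sel \<longrightarrow> CH_condition \<phi> \<omega> Sel)"

definition I_R :: "rnotion \<Rightarrow> (nat \<Rightarrow> bool) \<Rightarrow> real set" where
  "I_R R \<omega> = \<Inter> {I \<in> intervals. random R (\<lambda>_. I) \<omega>}"

definition I_phi :: "(bool list \<Rightarrow> real set) \<Rightarrow> (nat \<Rightarrow> bool) \<Rightarrow> real set" where
  "I_phi \<phi> \<omega> = {x. liminf (\<lambda>n. ereal (lower_fc \<phi> (pre \<omega> n))) \<le> ereal x
                   \<and> ereal x \<le> limsup (\<lambda>n. ereal (upper_fc \<phi> (pre \<omega> n)))}"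

end

theory Submission
  imports Defs
begin

definition rfn :: "nat \<Rightarrow> (nat list \<Rightarrow> nat) \<Rightarrow> bool" where
  "rfn k f \<longleftrightarrow> (\<exists>p. \<forall>xs. length xs = k \<longrightarrow> rf_eval p xs (f xs))"

lemma pj: "i < length xs \<Longrightarrow> xs ! i = y \<Longrightarrow> rf_eval (Pj i) xs y"
  using rf_eval.proj by blast

lemma rfn_zero: "rfn k (\<lambda>_. 0)"
  unfolding rfn_def by (auto intro: rf_eval.zero)

lemma rfn_proj: "i < k \<Longrightarrow> rfn k (\<lambda>xs. xs ! i)"
  unfolding rfn_def by (auto intro: rf_eval.proj)

lemma rfn_comp1:
  assumes "rfn 1 f" "rfn k g"
  shows "rfn k (\<lambda>xs. f [g xs])"
proof -
  obtain pf where pf: "\<And>xs. length xs = 1 \<Longrightarrow> rf_eval pf xs (f xs)" using assms(1) unfolding rfn_def by auto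
  obtain pg where pg: "\<And>xs. length xs = k \<Longrightarrow> rf_eval pg xs (g xs)" using assms(2) unfolding rfn_def by auto
  show ?thesis unfolding rfn_def
    by (rule exI[of _ "Cn pf [pg]"]) (auto intro!: rf_eval.comp[where ys="[g xs]" for xs] pf pg)
qed

lemma rfn_comp2:
  assumes "rfn 2 f" "rfn k g" "rfn k h"
  shows "rfn k (\<lambda>xs. f [g xs, h xs])"
proof -
  obtain pf where pf: "\<And>xs. length xs = 2 \<Longrightarrow> rf_eval pf xs (f xs)" using assms(1) unfolding rfn_def by auto
  obtain pg where pg: "\<And>xs. length xs = k \<Longrightarrow> rf_eval pg xs (g xs)" using assms(2) unfolding rfn_def by auto
  obtain ph where ph: "\<And>xs. length xs = k \<Longrightarrow> rf_eval ph xs (h xs)" using assms(3) unfolding rfn_def by auto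
  show ?thesis unfolding rfn_def
    by (rule exI[of _ "Cn pf [pg, ph]"]) (auto intro!: rf_eval.comp[where ys="[g xs, h xs]" for xs] pf pg ph)
qed

lemma rfn_cong: "rfn k f \<Longrightarrow> (\<And>xs. length xs = k \<Longrightarrow> f xs = g xs) \<Longrightarrow> rfn k g"
  unfolding rfn_def by metis

lemma rfn_iter:
  assumes "rfn 1 (\<lambda>xs. F (hd xs))"
  shows "rfn 2 (\<lambda>xs. (F ^^ (xs ! 0)) (xs ! 1))"
proof -
  obtain pF where pF: "\<And>xs. length xs = 1 \<Longrightarrow> rf_eval pF xs (F (hd xs))" using assms unfolding rfn_def by auto
  have "rf_eval (Pr (Pj 0) (Cn pF [Pj 0])) [n, x] ((F ^^ n) x)" for n x
  proof (induction n)
    case 0 then show ?case using rf_eval.prim0[OF rf_eval.proj[of 0 "[x]"]] by simp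
  next
    case (Suc n)
    have "rf_eval (Cn pF [Pj 0]) [(F ^^ n) x, n, x] (F ((F ^^ n) x))"
      by (rule rf_eval.comp[where ys="[(F ^^ n) x]"]) (use pF[of "[(F ^^ n) x]"] in \<open>auto intro: pj\<close>)
    then show ?case using rf_eval.primS[OF Suc] by simp
  qed
  then show ?thesis unfolding rfn_def
    by (intro exI[of _ "Pr (Pj 0) (Cn pF [Pj 0])"]) (auto simp: length_Suc_conv numeral_2_eq_2)
qed

lemma rfn_succ: "rfn 1 (\<lambda>xs. Suc (hd xs))"
  unfolding rfn_def by (rule exI[of _ Sc]) (auto simp: length_Suc_conv intro: rf_eval.succ)

lemma rfn_add: "rfn 2 (\<lambda>xs. xs ! 0 + xs ! 1)"
proof -
  have "rfn 2 (\<lambda>xs. (Suc ^^ (xs ! 0)) (xs ! 1))" by (rule rfn_iter) (rule rfn_succ)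
  then show ?thesis by (rule rfn_cong) simp
qed

lemma rfn_mu:
  assumes "rfn (Suc k) f" "\<And>xs. length xs = k \<Longrightarrow> \<exists>n. f (n # xs) = 0"
  shows "rfn k (\<lambda>xs. LEAST n. f (n # xs) = 0)"
proof -
  obtain p where p: "\<And>xs. length xs = Suc k \<Longrightarrow> rf_eval p xs (f xs)" using assms(1) unfolding rfn_def by auto
  show ?thesis unfolding rfn_def
  proof (intro exI[of _ "Mn p"] allI impI)
    fix xs :: "nat list" assume l: "length xs = k"
    define n where "n = (LEAST n. f (n # xs) = 0)"
    have z: "f (n # xs) = 0" unfolding n_def by (rule LeastI_ex[OF assms(2)[OF l]])
    have nz: "\<forall>m<n. \<exists>j. rf_eval p (m # xs) (Suc j)"
    proof (intro allI impI)
      fix m assume "m < n"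
      then have "f (m # xs) \<noteq> 0" unfolding n_def using not_less_Least by blast
      then obtain j where "f (m # xs) = Suc j" using not0_implies_Suc by blast
      then show "\<exists>j. rf_eval p (m # xs) (Suc j)" using p[of "m # xs"] l by auto
    qed
    have "rf_eval p (n # xs) 0" using z p[of "n # xs"] l by simp
    then have "rf_eval (Mn p) xs n" using nz by (rule rf_eval.mu)
    then show "rf_eval (Mn p) xs (LEAST n. f (n # xs) = 0)" unfolding n_def .
  qed
qed

definition rec1 :: "(nat \<Rightarrow> nat) \<Rightarrow> bool" where
  "rec1 F \<longleftrightarrow> rfn 1 (\<lambda>xs. F (hd xs))"
definition rec2 :: "(nat \<Rightarrow> nat \<Rightarrow> nat) \<Rightarrow> bool" where
  "rec2 F \<longleftrightarrow> rfn 2 (\<lambda>xs. F (xs ! 0) (xs ! 1))"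

lemma len1: "length xs = 1 \<longleftrightarrow> (\<exists>x. xs = [x])" "length xs = Suc 0 \<longleftrightarrow> (\<exists>x. xs = [x])"
  by (cases xs; auto)+
lemma len2: "length xs = 2 \<longleftrightarrow> (\<exists>x y. xs = [x, y])"
  by (auto simp: length_Suc_conv numeral_2_eq_2)

lemma rec1_cong: "rec1 f \<Longrightarrow> (\<And>x. f x = g x) \<Longrightarrow> rec1 g"
  by (metis ext)
lemma rec2_cong: "rec2 f \<Longrightarrow> (\<And>x y. f x y = g x y) \<Longrightarrow> rec2 g"
  by (metis ext)

lemma rec1_id: "rec1 (\<lambda>x. x)"
  unfolding rec1_def by (rule rfn_cong[OF rfn_proj[of 0 1]]) (auto simp: len1)

lemma rec1_comp: "rec1 f \<Longrightarrow> rec1 g \<Longrightarrow> rec1 (\<lambda>x. f (g x))"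
  unfolding rec1_def by (drule (1) rfn_comp1) (erule rfn_cong; auto simp: len1 len2)

lemma rec1_comp2: "rec2 f \<Longrightarrow> rec1 g \<Longrightarrow> rec1 h \<Longrightarrow> rec1 (\<lambda>x. f (g x) (h x))"
  unfolding rec1_def rec2_def by (drule (2) rfn_comp2) (erule rfn_cong; auto simp: len1 len2)

lemma rec2_comp2: "rec2 f \<Longrightarrow> rec2 g \<Longrightarrow> rec2 h \<Longrightarrow> rec2 (\<lambda>a b. f (g a b) (h a b))"
  unfolding rec2_def by (drule (2) rfn_comp2) (erule rfn_cong; auto simp: len1 len2)

lemma rec2_comp1: "rec1 f \<Longrightarrow> rec2 g \<Longrightarrow> rec2 (\<lambda>a b. f (g a b))"
  unfolding rec1_def rec2_def by (drule (1) rfn_comp1) (erule rfn_cong; auto simp: len1 len2)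

lemma rec2_fst: "rec2 (\<lambda>a b. a)"
  unfolding rec2_def by (rule rfn_proj) simp
lemma rec2_snd: "rec2 (\<lambda>a b. b)"
  unfolding rec2_def by (rule rfn_proj) simp

lemma rec1_succ: "rec1 Suc"
  unfolding rec1_def by (rule rfn_succ)

lemma rec1_const: "rec1 (\<lambda>_. c)"
proof (induction c)
  case 0 then show ?case unfolding rec1_def by (rule rfn_zero)
next
  case (Suc c) then show ?case using rec1_comp[OF rec1_succ] by blast
qed

lemma rec2_const: "rec2 (\<lambda>_ _. c)"
  using rec2_comp1[OF rec1_const rec2_fst] .

lemma rec2_iter: "rec1 F \<Longrightarrow> rec2 (\<lambda>n x. (F ^^ n) x)"
  unfolding rec1_def rec2_def by (rule rfn_iter)

lemma rec2_add: "rec2 (+)"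
  unfolding rec2_def by (rule rfn_add)

lemma rec1_pred: "rec1 (\<lambda>n. n - 1)"
proof -
  have "rf_eval (Pr Zr (Pj 1)) [n] (n - 1)" for n
  proof (induction n)
    case 0 then show ?case using rf_eval.prim0[OF rf_eval.zero[of "[]"]] by simp
  next
    case (Suc n)
    show ?case using rf_eval.primS[OF Suc pj[of 1 "[n - 1, n]" n]] by simp
  qed
  note m = this
  show ?thesis unfolding rec1_def rfn_def
  proof (intro exI[of _ "Pr Zr (Pj 1)"] allI impI)
    fix xs :: "nat list" assume "length xs = 1"
    then obtain x where "xs = [x]" by (auto simp: len1)
    then show "rf_eval (Pr Zr (Pj 1)) xs (hd xs - 1)" using m[of x] by simp
  qed
qed

lemma rec2_minus: "rec2 (-)"
proof -
  have r: "rec2 (\<lambda>n x. ((\<lambda>n. n - 1) ^^ n) x)" by (rule rec2_iter[OF rec1_pred])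
  have e: "((\<lambda>n. n - 1) ^^ n) x = x - n" for n x :: nat
    by (induction n arbitrary: x) (auto simp del: funpow.simps simp: funpow_Suc_right)
  have "rec2 (\<lambda>n x. x - n)" by (rule rec2_cong[OF r e])
  from rec2_comp2[OF this rec2_snd rec2_fst] show ?thesis by (rule rec2_cong) simp
qed

lemma rec2_mult: "rec2 (*)"
proof -
  obtain pa where pa: "\<And>xs. length xs = 2 \<Longrightarrow> rf_eval pa xs (xs ! 0 + xs ! 1)" using rfn_add unfolding rfn_def by auto
  have "rf_eval (Pr Zr (Cn pa [Pj 0, Pj 2])) [n, x] (n * x)" for n x
  proof (induction n)
    case 0 then show ?case using rf_eval.prim0[OF rf_eval.zero[of "[x]"]] by simp
  next
    case (Suc n)
    have "rf_eval (Cn pa [Pj 0, Pj 2]) [n * x, n, x] (n * x + x)"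
      by (rule rf_eval.comp[where ys="[n * x, x]"]) (use pa[of "[n * x, x]"] in \<open>auto intro: pj\<close>)
    then show ?case using rf_eval.primS[OF Suc] by (simp add: add.commute)
  qed
  note m = this
  show ?thesis unfolding rec2_def rfn_def
  proof (intro exI[of _ "Pr Zr (Cn pa [Pj 0, Pj 2])"] allI impI)
    fix xs :: "nat list" assume "length xs = 2"
    then obtain x y where "xs = [x, y]" by (auto simp: len2)
    then show "rf_eval (Pr Zr (Cn pa [Pj 0, Pj 2])) xs (xs ! 0 * xs ! 1)" using m[of x y] by simp
  qed
qed

lemma rec1_tri: "rec1 (\<lambda>n. triangle n)"
proof -
  obtain pa where pa: "\<And>xs. length xs = 2 \<Longrightarrow> rf_eval pa xs (xs ! 0 + xs ! 1)" using rfn_add unfolding rfn_def by auto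
  have "rf_eval (Pr Zr (Cn pa [Pj 0, Cn Sc [Pj 1]])) [n] (triangle n)" for n
  proof (induction n)
    case 0 then show ?case using rf_eval.prim0[OF rf_eval.zero[of "[]"]] by simp
  next
    case (Suc n)
    have s: "rf_eval (Cn Sc [Pj 1]) [triangle n, n] (Suc n)"
      by (rule rf_eval.comp[where ys="[n]"]) (auto intro: pj rf_eval.succ)
    have "rf_eval (Cn pa [Pj 0, Cn Sc [Pj 1]]) [triangle n, n] (triangle n + Suc n)"
      by (rule rf_eval.comp[where ys="[triangle n, Suc n]"]) (use pa[of "[triangle n, Suc n]"] s in \<open>auto intro: pj\<close>)
    then show ?case using rf_eval.primS[OF Suc] by (simp add: add.commute)
  qed
  note tri = this
  show ?thesis unfolding rec1_def rfn_def
  proof (intro exI[of _ "Pr Zr (Cn pa [Pj 0, Cn Sc [Pj 1]])"] allI impI)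
    fix xs :: "nat list" assume "length xs = 1"
    then obtain x where "xs = [x]" by (auto simp: len1)
    then show "rf_eval (Pr Zr (Cn pa [Pj 0, Cn Sc [Pj 1]])) xs (triangle (hd xs))" using tri[of x] by simp
  qed
qed

lemma rec2_pe: "rec2 (\<lambda>a b. prod_encode (a, b))"
proof -
  have t: "rec2 (\<lambda>a b. triangle (a + b))" by (rule rec2_comp1[OF rec1_tri rec2_add])
  have "rec2 (\<lambda>a b. triangle (a + b) + a)" using rec2_comp2[OF rec2_add t rec2_fst] by simp
  then show ?thesis by (simp add: prod_encode_def)
qed

lemma rec2_mu:
  assumes "rec2 f" "\<And>x. \<exists>n. f n x = 0"
  shows "rec1 (\<lambda>x. LEAST n. f n x = 0)"
proof -
  have "rfn 2 (\<lambda>ys. f (hd ys) (hd (tl ys)))"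
    using assms(1) unfolding rec2_def by (rule rfn_cong) (auto simp: len2)
  then have "rfn (Suc 1) (\<lambda>ys. f (hd ys) (hd (tl ys)))" by (metis Suc_1)
  from rfn_mu[OF this] assms(2) have "rfn 1 (\<lambda>xs. LEAST n. f n (hd xs) = 0)" by simp
  then show ?thesis unfolding rec1_def .
qed


definition pfst :: "nat \<Rightarrow> nat" where "pfst m = fst (prod_decode m)"
definition psnd :: "nat \<Rightarrow> nat" where "psnd m = snd (prod_decode m)"

lemma pfst_pe[simp]: "pfst (prod_encode (a, b)) = a" by (simp add: pfst_def)
lemma psnd_pe[simp]: "psnd (prod_encode (a, b)) = b" by (simp add: psnd_def)

lemma rec1_add: "rec1 f \<Longrightarrow> rec1 g \<Longrightarrow> rec1 (\<lambda>x. f x + g x)"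
  by (rule rec1_comp2[OF rec2_add])
lemma rec1_minus: "rec1 f \<Longrightarrow> rec1 g \<Longrightarrow> rec1 (\<lambda>x. f x - g x)"
  by (rule rec1_comp2[OF rec2_minus])
lemma rec1_mult: "rec1 f \<Longrightarrow> rec1 g \<Longrightarrow> rec1 (\<lambda>x. f x * g x)"
  by (rule rec1_comp2[OF rec2_mult])
lemma rec1_pair: "rec1 f \<Longrightarrow> rec1 g \<Longrightarrow> rec1 (\<lambda>x. prod_encode (f x, g x))"
  by (rule rec1_comp2[OF rec2_pe])
lemma rec1_triangle: "rec1 f \<Longrightarrow> rec1 (\<lambda>x. triangle (f x))"
  by (rule rec1_comp[OF rec1_tri])

lemma pd_char:
  fixes m :: nat
  defines "s \<equiv> LEAST s. m < triangle (Suc s)"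
  shows "prod_decode m = (m - triangle s, s - (m - triangle s))"
proof -
  have ex: "m < triangle (Suc m)" by simp
  have s1: "m < triangle (Suc s)" unfolding s_def by (rule LeastI[of _ m]) (rule ex)
  have s2: "triangle s \<le> m"
  proof (cases s)
    case 0 then show ?thesis by simp
  next
    case (Suc s')
    then have "s' < s" by simp
    then have "\<not> m < triangle (Suc s')" unfolding s_def by (rule not_less_Least)
    then show ?thesis using Suc by simp
  qed
  have a: "m - triangle s \<le> s" using s1 s2 by simp
  have "prod_encode (m - triangle s, s - (m - triangle s)) = m"
    using a s2 by (simp add: prod_encode_def)
  then show ?thesis by (metis prod_encode_inverse)
qed

lemma rec1_pds: "rec1 (\<lambda>m. LEAST s. m < triangle (Suc s))"
proof -
  have r: "rec2 (\<lambda>s m. Suc m - triangle (Suc s))"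
    by (rule rec2_comp2[OF rec2_minus rec2_comp1[OF rec1_succ rec2_snd] rec2_comp1[OF rec1_comp[OF rec1_tri rec1_succ] rec2_fst]])
  have "rec1 (\<lambda>m. LEAST s. Suc m - triangle (Suc s) = 0)"
  proof (rule rec2_mu[OF r])
    fix m :: nat show "\<exists>n. Suc m - triangle (Suc n) = 0" by (rule exI[of _ m]) simp
  qed
  then show ?thesis by (rule rec1_cong) (simp add: less_Suc_eq_le)
qed

lemma rec1_pfst: "rec1 pfst"
proof -
  have "rec1 (\<lambda>m. m - triangle (LEAST s. m < triangle (Suc s)))"
    by (rule rec1_minus[OF rec1_id rec1_triangle[OF rec1_pds]])
  then show ?thesis by (rule rec1_cong) (simp add: pfst_def pd_char)
qed

lemma rec1_psnd: "rec1 psnd"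
proof -
  have "rec1 (\<lambda>m. (LEAST s. m < triangle (Suc s)) - (m - triangle (LEAST s. m < triangle (Suc s))))"
    by (rule rec1_minus[OF rec1_pds rec1_minus[OF rec1_id rec1_triangle[OF rec1_pds]]])
  then show ?thesis by (rule rec1_cong) (simp add: psnd_def pd_char)
qed

lemma rec1_iter: "rec1 F \<Longrightarrow> rec1 a \<Longrightarrow> rec1 b \<Longrightarrow> rec1 (\<lambda>x. (F ^^ a x) (b x))"
  by (rule rec1_comp2[OF rec2_iter])

lemma rec1_mu:
  assumes "rec1 F" "\<And>x. \<exists>n. F (prod_encode (n, x)) = 0"
  shows "rec1 (\<lambda>x. LEAST n. F (prod_encode (n, x)) = 0)"
  by (rule rec2_mu[OF rec2_comp1[OF assms(1) rec2_pe]]) (rule assms(2))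

definition recP :: "(nat \<Rightarrow> bool) \<Rightarrow> bool" where
  "recP Q \<longleftrightarrow> rec1 (\<lambda>x. of_bool (Q x))"

lemma recP_cong:
  assumes "recP P" "\<And>x. P x = Q x" shows "recP Q"
proof -
  have "P = Q" using assms(2) by blast
  then show ?thesis using assms(1) by simp
qed

lemma recP_const: "recP (\<lambda>_. b)"
  unfolding recP_def by (rule rec1_const)

lemma recP_le:
  assumes "rec1 f" "rec1 g" shows "recP (\<lambda>x. f x \<le> g x)"
  unfolding recP_def
  by (rule rec1_cong[OF rec1_minus[OF rec1_const[of 1] rec1_minus[OF assms]]]) auto

lemma recP_not:
  assumes "recP P" shows "recP (\<lambda>x. \<not> P x)"
  unfolding recP_def
  by (rule rec1_cong[OF rec1_minus[OF rec1_const[of 1] assms[unfolded recP_def]]]) auto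

lemma recP_conj:
  assumes "recP P" "recP Q" shows "recP (\<lambda>x. P x \<and> Q x)"
  unfolding recP_def
  by (rule rec1_cong[OF rec1_mult[OF assms[unfolded recP_def]]]) auto

lemma recP_disj: "recP P \<Longrightarrow> recP Q \<Longrightarrow> recP (\<lambda>x. P x \<or> Q x)"
proof -
  assume "recP P" "recP Q"
  then have "recP (\<lambda>x. \<not> (\<not> P x \<and> \<not> Q x))" by (intro recP_not recP_conj)
  then show ?thesis by (rule recP_cong) simp
qed

lemma recP_less:
  assumes "rec1 f" "rec1 g" shows "recP (\<lambda>x. f x < g x)"
  by (rule recP_cong[OF recP_not[OF recP_le[OF assms(2,1)]]]) auto

lemma recP_eq:
  assumes "rec1 f" "rec1 g" shows "recP (\<lambda>x. f x = g x)"
  by (rule recP_cong[OF recP_conj[OF recP_le[OF assms] recP_le[OF assms(2,1)]]]) auto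

lemma rec1_if:
  assumes "recP P" "rec1 a" "rec1 b" shows "rec1 (\<lambda>x. if P x then a x else b x)"
proof -
  have p: "rec1 (\<lambda>x. of_bool (P x))" using assms(1) unfolding recP_def .
  show ?thesis
    by (rule rec1_cong[OF rec1_add[OF rec1_mult[OF assms(2) p] rec1_mult[OF assms(3) rec1_minus[OF rec1_const[of 1] p]]]]) auto
qed

lemma recP_comp: "recP P \<Longrightarrow> rec1 f \<Longrightarrow> recP (\<lambda>x. P (f x))"
  unfolding recP_def by (rule rec1_comp)

lemma rec1_least:
  assumes "recP (\<lambda>z. P (pfst z) (psnd z))" "\<And>x. \<exists>n. P n x"
  shows "rec1 (\<lambda>x. LEAST n. P n x)"
proof -
  have "rec1 (\<lambda>z. 1 - of_bool (P (pfst z) (psnd z)))"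
    using assms(1) unfolding recP_def by (rule rec1_minus[OF rec1_const])
  from rec1_mu[OF this] have "rec1 (\<lambda>x. LEAST n. 1 - of_bool (P n x) = (0::nat))"
    using assms(2) by simp
  then show ?thesis by (rule rec1_cong) simp
qed

lemma div_least: "0 < b \<Longrightarrow> (LEAST q. a < b * Suc q \<or> a \<le> q) = a div (b::nat)"
proof (rule Least_equality)
  assume b: "0 < b"
  have m: "a mod b < b" using b by simp
  have d: "b * (a div b) + a mod b = a" by (rule mult_div_mod_eq)
  have e: "b * Suc (a div b) = b + b * (a div b)" by simp
  have "a < b * Suc (a div b)" using m d e by linarith
  then show "a < b * Suc (a div b) \<or> a \<le> a div b" ..
  fix y assume "a < b * Suc y \<or> a \<le> y"
  then show "a div b \<le> y"
  proof
    assume "a < b * Suc y"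
    then have "a < Suc y * b" by (simp add: mult.commute)
    then have "a div b < Suc y" by (rule less_mult_imp_div_less)
    then show ?thesis by simp
  next
    assume "a \<le> y" moreover have "a div b \<le> a" by (rule div_le_dividend)
    ultimately show ?thesis by linarith
  qed
qed

lemma rec1_div: "rec1 f \<Longrightarrow> rec1 g \<Longrightarrow> rec1 (\<lambda>x. f x div g x)"
proof -
  have P: "recP (\<lambda>z. pfst (psnd z) < psnd (psnd z) * Suc (pfst z) \<or> pfst (psnd z) \<le> pfst z)"
    by (intro recP_disj recP_less recP_le rec1_mult rec1_comp[OF rec1_succ] rec1_comp[OF rec1_pfst]
        rec1_comp[OF rec1_psnd] rec1_pfst rec1_psnd rec1_id)
  have "rec1 (\<lambda>x. LEAST q. pfst x < psnd x * Suc q \<or> pfst x \<le> q)"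
    by (rule rec1_least[OF P]) blast
  then have d: "rec1 (\<lambda>x. if psnd x = 0 then 0 else LEAST q. pfst x < psnd x * Suc q \<or> pfst x \<le> q)"
    by (intro rec1_if recP_eq rec1_psnd rec1_const)
  have "rec1 (\<lambda>x. pfst x div psnd x)" by (rule rec1_cong[OF d]) (simp add: div_least del: mult_Suc_right)
  moreover assume "rec1 f" "rec1 g"
  ultimately show ?thesis using rec1_comp[OF _ rec1_pair] by fastforce
qed


lemma rec1_mod: "rec1 f \<Longrightarrow> rec1 g \<Longrightarrow> rec1 (\<lambda>x. f x mod g x)"
proof -
  assume f: "rec1 f" and g: "rec1 g"
  have "rec1 (\<lambda>x. f x - g x * (f x div g x))" by (rule rec1_minus[OF f rec1_mult[OF g rec1_div[OF f g]]])
  then show ?thesis by (rule rec1_cong) (simp add: minus_mult_div_eq_mod)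
qed

lemma recP_even: "rec1 f \<Longrightarrow> recP (\<lambda>x. even (f x))"
proof -
  assume f: "rec1 f"
  have "recP (\<lambda>x. f x mod 2 = 0)" by (rule recP_eq[OF rec1_mod[OF f rec1_const] rec1_const])
  then show ?thesis by (rule recP_cong) (simp add: even_iff_mod_2_eq_zero)
qed

definition gs :: "nat \<times> nat \<Rightarrow> nat \<times> nat" where
  "gs p = (if snd p = 0 then p else (snd p, fst p mod snd p))"

lemma gs_gcd: "gcd (fst ((gs ^^ k) p)) (snd ((gs ^^ k) p)) = gcd (fst p) (snd p)"
proof (induction k)
  case 0 then show ?case by simp
next
  case (Suc k)
  obtain a b where ab: "(gs ^^ k) p = (a, b)" by fastforce
  have "gcd (fst (gs (a, b))) (snd (gs (a, b))) = gcd a b"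
  proof (cases "b = 0")
    case True then show ?thesis by (simp add: gs_def)
  next
    case False
    then have "gcd a b = gcd b (a mod b)" by (rule gcd_non_0_nat)
    then show ?thesis using False by (simp add: gs_def)
  qed
  then show ?case using Suc ab by simp
qed

lemma gs_snd: "snd ((gs ^^ k) p) \<le> snd p - k"
proof (induction k)
  case 0 then show ?case by simp
next
  case (Suc k)
  obtain a b where ab: "(gs ^^ k) p = (a, b)" by fastforce
  have "snd (gs (a, b)) = 0 \<or> snd (gs (a, b)) < b"
    by (auto simp: gs_def)
  then show ?case using Suc ab by auto
qed

lemma gs_final: "fst ((gs ^^ (snd p)) p) = gcd (fst p) (snd p)"
proof -
  have "snd ((gs ^^ (snd p)) p) = 0" using gs_snd[of "snd p" p] by simp
  then show ?thesis using gs_gcd[of "snd p" p] by simp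
qed

definition gstep :: "nat \<Rightarrow> nat" where
  "gstep z = (if psnd z = 0 then z else prod_encode (psnd z, pfst z mod psnd z))"

lemma gstep_pe: "gstep (prod_encode p) = prod_encode (gs p)"
  by (cases p) (auto simp: gstep_def gs_def)

lemma gstep_iter: "(gstep ^^ k) (prod_encode p) = prod_encode ((gs ^^ k) p)"
  by (induction k) (simp_all add: gstep_pe)

lemma rec1_gstep: "rec1 gstep"
  unfolding gstep_def
  by (rule rec1_if[OF recP_eq[OF rec1_psnd rec1_const] rec1_id rec1_pair[OF rec1_psnd rec1_mod[OF rec1_pfst rec1_psnd]]])

lemma rec1_gcd: "rec1 f \<Longrightarrow> rec1 g \<Longrightarrow> rec1 (\<lambda>x. gcd (f x) (g x))"
proof -
  assume f: "rec1 f" and g: "rec1 g"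
  have "rec1 (\<lambda>z. pfst ((gstep ^^ psnd z) z))"
    by (rule rec1_comp[OF rec1_pfst rec1_iter[OF rec1_gstep rec1_psnd rec1_id]])
  then have "rec1 (\<lambda>z. gcd (pfst z) (psnd z))"
  proof (rule rec1_cong)
    fix z :: nat
    obtain p where p: "z = prod_encode p" by (metis prod_decode_inverse)
    show "pfst ((gstep ^^ psnd z) z) = gcd (pfst z) (psnd z)"
      using gs_final[of p] unfolding p gstep_iter by (simp add: pfst_def psnd_def)
  qed
  from rec1_comp[OF this rec1_pair[OF f g]] show ?thesis by simp
qed

definition ltl :: "nat \<Rightarrow> nat" where "ltl c = psnd (c - 1)"
definition lhd :: "nat \<Rightarrow> nat" where "lhd c = pfst (c - 1)"

lemma ltl_cons[simp]: "ltl (Suc (prod_encode (x, c))) = c" by (simp add: ltl_def)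
lemma lhd_cons[simp]: "lhd (Suc (prod_encode (x, c))) = x" by (simp add: lhd_def)

lemma ltl_enc[simp]: "ltl (list_encode xs) = list_encode (tl xs)"
proof (cases xs)
  case Nil
  have "prod_decode 0 = (0, 0)" using prod_encode_inverse[of "(0,0)"] by (simp add: prod_encode_def)
  then show ?thesis using Nil by (simp add: ltl_def psnd_def)
qed (simp add: ltl_def)

lemma lhd_enc[simp]: "xs \<noteq> [] \<Longrightarrow> lhd (list_encode xs) = hd xs"
  by (cases xs) (auto simp: lhd_def)

lemma rec1_ltl: "rec1 ltl"
  unfolding ltl_def by (rule rec1_comp[OF rec1_psnd rec1_pred])
lemma rec1_lhd: "rec1 lhd"
  unfolding lhd_def by (rule rec1_comp[OF rec1_pfst rec1_pred])

lemma ltl_iter: "(ltl ^^ k) (list_encode xs) = list_encode (drop k xs)"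
  by (induction k) (auto simp: drop_Suc tl_drop)

definition llen :: "nat \<Rightarrow> nat" where
  "llen c = (LEAST k. (ltl ^^ k) c = 0)"

lemma llen_enc[simp]: "llen (list_encode xs) = length xs"
proof -
  have e: "list_encode ys = 0 \<longleftrightarrow> ys = []" for ys by (cases ys) auto
  show ?thesis unfolding llen_def ltl_iter e
    by (rule Least_equality) auto
qed

lemma rec1_llen: "rec1 llen"
proof -
  have "recP (\<lambda>z. (ltl ^^ pfst z) (psnd z) = 0)"
    by (rule recP_eq[OF rec1_iter[OF rec1_ltl rec1_pfst rec1_psnd] rec1_const])
  then have "rec1 (\<lambda>c. LEAST k. (ltl ^^ k) c = 0)"
  proof (rule rec1_least)
    fix c :: nat
    obtain xs where "c = list_encode xs" by (metis list_decode_inverse)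
    then show "\<exists>k. (ltl ^^ k) c = 0" using ltl_iter[of "length xs" xs] by auto
  qed
  then show ?thesis unfolding llen_def .
qed

definition rstep :: "nat \<Rightarrow> nat" where
  "rstep z = prod_encode (ltl (pfst z), Suc (prod_encode (lhd (pfst z), psnd z)))"

lemma rec1_rstep: "rec1 rstep"
  unfolding rstep_def
  by (rule rec1_pair[OF rec1_comp[OF rec1_ltl rec1_pfst] rec1_comp[OF rec1_succ rec1_pair[OF rec1_comp[OF rec1_lhd rec1_pfst] rec1_psnd]]])

lemma rstep_iter: "k \<le> length xs \<Longrightarrow>
  (rstep ^^ k) (prod_encode (list_encode xs, list_encode acc)) =
    prod_encode (list_encode (drop k xs), list_encode (rev (take k xs) @ acc))"
proof (induction k)
  case 0 then show ?case by simp
next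
  case (Suc k)
  then have k: "k < length xs" by simp
  have d: "drop k xs = xs ! k # drop (Suc k) xs" using k by (simp add: Cons_nth_drop_Suc)
  have t: "take (Suc k) xs = take k xs @ [xs ! k]" using k by (simp add: take_Suc_conv_app_nth)
  show ?case using Suc k by (simp add: rstep_def d t)
qed

definition lrev :: "nat \<Rightarrow> nat" where
  "lrev c = psnd ((rstep ^^ llen c) (prod_encode (c, 0)))"

lemma lrev_enc[simp]: "lrev (list_encode xs) = list_encode (rev xs)"
  using rstep_iter[of "length xs" xs "[]"] by (simp add: lrev_def)

lemma rec1_lrev: "rec1 lrev"
  unfolding lrev_def
  by (rule rec1_comp[OF rec1_psnd rec1_iter[OF rec1_rstep rec1_llen rec1_pair[OF rec1_id rec1_const]]])

definition ltake :: "nat \<Rightarrow> nat \<Rightarrow> nat" where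
  "ltake m c = lrev ((ltl ^^ (llen c - m)) (lrev c))"

lemma ltake_enc[simp]: "ltake m (list_encode xs) = list_encode (take m xs)"
proof -
  have "rev (drop (length xs - m) (rev xs)) = take m xs"
  proof (cases "m \<le> length xs")
    case True then show ?thesis by (simp add: rev_drop)
  next
    case False then show ?thesis by (simp add: rev_drop)
  qed
  then show ?thesis by (simp add: ltake_def ltl_iter)
qed

lemma rec1_ltake: "rec1 m \<Longrightarrow> rec1 c \<Longrightarrow> rec1 (\<lambda>x. ltake (m x) (c x))"
  unfolding ltake_def
  by (rule rec1_comp[OF rec1_lrev rec1_iter[OF rec1_ltl rec1_minus[OF rec1_comp[OF rec1_llen] ] rec1_comp[OF rec1_lrev]]])


lemma ie_def: "int_encode n = (if 0 \<le> n then 2 * nat n else Suc (2 * nat (- n - 1)))"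
  by (simp add: int_encode_def sum_encode_def)

lemma ie_even: "even (int_encode n) \<longleftrightarrow> 0 \<le> n"
  by (simp add: ie_def)

lemma ie_div2_pos: "0 \<le> n \<Longrightarrow> int_encode n div 2 = nat n"
  by (simp add: ie_def)

lemma ie_div2_neg:
  assumes "n < 0" shows "Suc (int_encode n div 2) = nat (- n)"
proof -
  have "int_encode n = Suc (2 * nat (- n - 1))" using assms by (simp add: ie_def)
  then have "int_encode n div 2 = nat (- n - 1)" by simp
  then show ?thesis using assms by simp
qed

lemma enc_rat_qo: "quotient_of q = (n, d) \<Longrightarrow> enc_rat q = prod_encode (int_encode n, nat d)"
  by (simp add: enc_rat_def)

definition absn :: "nat \<Rightarrow> nat" where
  "absn e = (if even e then e div 2 else e div 2 + 1)"

lemma absn_ie: "absn (int_encode n) = nat \<bar>n\<bar>"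
  by (cases "0 \<le> n") (auto simp: absn_def ie_even ie_div2_pos ie_div2_neg)

lemma rec1_absn: "rec1 f \<Longrightarrow> rec1 (\<lambda>x. absn (f x))"
  unfolding absn_def
  by (rule rec1_if[OF recP_even rec1_div[OF _ rec1_const] rec1_add[OF rec1_div[OF _ rec1_const] rec1_const]])

definition scalefn :: "nat \<Rightarrow> nat \<Rightarrow> nat" where
  "scalefn K c = (let e = pfst c; B = psnd c * K; m = absn e; G = gcd m B
                  in prod_encode (if even e then 2 * (m div G) else 2 * (m div G) - 1, B div G))"

lemma rec1_scalefn: "rec1 (scalefn K)"
proof -
  have m: "rec1 (\<lambda>c. absn (pfst c))" by (rule rec1_absn[OF rec1_pfst])
  have B: "rec1 (\<lambda>c. psnd c * K)" by (rule rec1_mult[OF rec1_psnd rec1_const])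
  have G: "rec1 (\<lambda>c. gcd (absn (pfst c)) (psnd c * K))" by (rule rec1_gcd[OF m B])
  have d: "rec1 (\<lambda>c. absn (pfst c) div gcd (absn (pfst c)) (psnd c * K))" by (rule rec1_div[OF m G])
  show ?thesis unfolding scalefn_def Let_def
    by (rule rec1_pair[OF rec1_if[OF recP_even[OF rec1_pfst] rec1_mult[OF rec1_const d]
          rec1_minus[OF rec1_mult[OF rec1_const d] rec1_const]] rec1_div[OF B G]])
qed

lemma scalefn_correct:
  assumes K: "0 < K"
  shows "scalefn K (enc_rat q) = enc_rat (q / of_nat K)"
proof -
  obtain n d where nd: "quotient_of q = (n, d)" by fastforce
  have d0: "0 < d" using quotient_of_denom_pos[OF nd] .
  have q: "q = Fract n d" using quotient_of_div[OF nd] by (simp add: Fract_of_int_quotient)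
  define B where "B = nat d * K"
  have B0: "0 < B" using d0 K by (simp add: B_def)
  have qK: "q / of_nat K = Fract n (int B)"
    using d0 K by (simp add: q B_def Fract_of_int_quotient)
  define m where "m = nat \<bar>n\<bar>"
  define G where "G = gcd m B"
  have G0: "0 < G" using B0 by (simp add: G_def)
  have im: "int m = \<bar>n\<bar>" by (simp add: m_def)
  have "gcd n (int B) = gcd \<bar>n\<bar> (int B)" by (rule gcd_abs1_int[symmetric])
  also have "\<dots> = gcd (int m) (int B)" by (simp only: im)
  also have "\<dots> = int G" by (simp only: gcd_int_int_eq G_def)
  finally have g: "gcd n (int B) = int G" .
  have qo: "quotient_of (q / of_nat K) = (n div int G, int B div int G)"
    using B0 by (simp add: qK quotient_of_Fract normalize_def g Let_def)
  have Gm: "G dvd m" by (simp add: G_def)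
  have nB: "nat (int B div int G) = B div G" by (simp add: zdiv_int[symmetric])
  have num: "int_encode (n div int G) = (if even (int_encode n) then 2 * (m div G) else 2 * (m div G) - 1)"
  proof (cases "0 \<le> n")
    case True
    then have "n = int m" by (simp add: m_def)
    then have "n div int G = int (m div G)" by (simp add: zdiv_int)
    then show ?thesis using True by (simp add: ie_def ie_even)
  next
    case False
    then have n: "n = - int m" by (simp add: m_def)
    have m0: "0 < m" using False by (simp add: m_def)
    have "int m mod int G = 0" using Gm by (simp add: zmod_int[symmetric])
    moreover have "int G \<noteq> 0" using G0 by simp
    ultimately have "n div int G = - (int m div int G)" by (simp add: n zdiv_zminus1_eq_if)
    then have "n div int G = - int (m div G)" by (simp add: zdiv_int)
    moreover have "0 < m div G" using m0 G0 dvd_imp_le[OF Gm m0] by (simp add: div_greater_zero_iff)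
    ultimately show ?thesis using False by (simp add: ie_def ie_even)
  qed
  show ?thesis
    unfolding enc_rat_qo[OF nd] enc_rat_qo[OF qo] scalefn_def Let_def
    using num nB by (simp add: absn_ie m_def[symmetric] B_def[symmetric] G_def[symmetric])
qed

lemma rat_gt_code:
  fixes a :: rat
  assumes a: "0 < a"
  shows "\<exists>Q. recP Q \<and> (\<forall>q. Q (enc_rat q) \<longleftrightarrow> a < q)"
proof -
  obtain a1 a2 where aq: "quotient_of a = (a1, a2)" by fastforce
  have a2: "0 < a2" using quotient_of_denom_pos[OF aq] .
  have av: "a = of_int a1 / of_int a2" using quotient_of_div[OF aq] .
  have a1: "0 < a1" using a a2 by (simp add: av zero_less_divide_iff)
  define Q where "Q c \<longleftrightarrow> even (pfst c) \<and> nat a1 * psnd c < (pfst c div 2) * nat a2" for c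
  have "recP Q" unfolding Q_def
    by (rule recP_conj[OF recP_even[OF rec1_pfst] recP_less[OF rec1_mult[OF rec1_const rec1_psnd]
          rec1_mult[OF rec1_div[OF rec1_pfst rec1_const] rec1_const]]])
  moreover have "Q (enc_rat q) \<longleftrightarrow> a < q" for q
  proof -
    obtain n d where nd: "quotient_of q = (n, d)" by fastforce
    have d0: "0 < d" using quotient_of_denom_pos[OF nd] .
    have qv: "q = of_int n / of_int d" using quotient_of_div[OF nd] .
    have "a < q \<longleftrightarrow> of_int a1 / of_int a2 < (of_int n / of_int d :: rat)" by (simp add: av qv)
    also have "\<dots> \<longleftrightarrow> a1 * d < n * a2"
      using a2 d0 by (simp add: divide_less_eq less_divide_eq of_int_mult[symmetric] del: of_int_mult)
    finally have e: "a < q \<longleftrightarrow> a1 * d < n * a2" .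
    show ?thesis
    proof (cases "0 \<le> n")
      case True
      have "a1 * d < n * a2 \<longleftrightarrow> nat (a1 * d) < nat (n * a2)"
        using a1 d0 by (subst nat_less_eq_zless) simp_all
      also have "\<dots> \<longleftrightarrow> nat a1 * nat d < nat n * nat a2"
        using True a1 a2 d0 by (simp add: nat_mult_distrib)
      finally have "a1 * d < n * a2 \<longleftrightarrow> nat a1 * nat d < nat n * nat a2" .
      then show ?thesis using True e unfolding Q_def enc_rat_qo[OF nd]
        by (simp add: ie_even ie_div2_pos)
    next
      case False
      have "\<not> a1 * d < n * a2"
      proof -
        have "0 < a1 * d" using a1 d0 by simp
        moreover have "n * a2 < 0" using False a2 by (simp add: mult_neg_pos)
        ultimately show ?thesis by linarith
      qed
      then show ?thesis using False e unfolding Q_def enc_rat_qo[OF nd] by (simp add: ie_even)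
    qed
  qed
  ultimately show ?thesis by blast
qed

lemma rat_lt_code:
  fixes a :: rat
  assumes a: "0 < a"
  shows "\<exists>Q. recP Q \<and> (\<forall>q. Q (enc_rat q) \<longleftrightarrow> q < a)"
proof -
  obtain a1 a2 where aq: "quotient_of a = (a1, a2)" by fastforce
  have a2: "0 < a2" using quotient_of_denom_pos[OF aq] .
  have av: "a = of_int a1 / of_int a2" using quotient_of_div[OF aq] .
  have a1: "0 < a1" using a a2 by (simp add: av zero_less_divide_iff)
  define Q where "Q c \<longleftrightarrow> \<not> even (pfst c) \<or> (pfst c div 2) * nat a2 < nat a1 * psnd c" for c
  have "recP Q" unfolding Q_def
    by (rule recP_disj[OF recP_not[OF recP_even[OF rec1_pfst]] recP_less[OF 
          rec1_mult[OF rec1_div[OF rec1_pfst rec1_const] rec1_const] rec1_mult[OF rec1_const rec1_psnd]]])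
  moreover have "Q (enc_rat q) \<longleftrightarrow> q < a" for q
  proof -
    obtain n d where nd: "quotient_of q = (n, d)" by fastforce
    have d0: "0 < d" using quotient_of_denom_pos[OF nd] .
    have qv: "q = of_int n / of_int d" using quotient_of_div[OF nd] .
    have "q < a \<longleftrightarrow> (of_int n / of_int d :: rat) < of_int a1 / of_int a2" by (simp add: av qv)
    also have "\<dots> \<longleftrightarrow> n * a2 < a1 * d"
      using a2 d0 by (simp add: divide_less_eq less_divide_eq of_int_mult[symmetric] del: of_int_mult)
    finally have e: "q < a \<longleftrightarrow> n * a2 < a1 * d" .
    show ?thesis
    proof (cases "0 \<le> n")
      case True
      have "n * a2 < a1 * d \<longleftrightarrow> nat (n * a2) < nat (a1 * d)"
        using True a2 by (subst nat_less_eq_zless) simp_all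
      also have "\<dots> \<longleftrightarrow> nat n * nat a2 < nat a1 * nat d"
        using True a1 a2 d0 by (simp add: nat_mult_distrib)
      finally have "n * a2 < a1 * d \<longleftrightarrow> nat n * nat a2 < nat a1 * nat d" .
      then show ?thesis using True e unfolding Q_def enc_rat_qo[OF nd]
        by (simp add: ie_even ie_div2_pos)
    next
      case False
      have "n * a2 < a1 * d"
      proof -
        have "0 < a1 * d" using a1 d0 by simp
        moreover have "n * a2 < 0" using False a2 by (simp add: mult_neg_pos)
        ultimately show ?thesis by linarith
      qed
      then show ?thesis using False e unfolding Q_def enc_rat_qo[OF nd] by (simp add: ie_even)
    qed
  qed
  ultimately show ?thesis by blast
qed


lemma intervals_D: "I \<in> intervals \<Longrightarrow> \<exists>a b. I = {a..b} \<and> 0 \<le> a \<and> a \<le> b \<and> b \<le> 1"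
  unfolding intervals_def by blast

lemma ue_le0:
  assumes "J \<noteq> {}" "\<And>p. p \<in> J \<Longrightarrow> p * f True + (1 - p) * f False \<le> 0"
  shows "upper_exp J f \<le> 0"
  unfolding upper_exp_def using assms by (auto intro!: cSup_least)

lemma ue_ge:
  assumes "J \<in> intervals" "p \<in> J"
  shows "p * f True + (1 - p) * f False \<le> upper_exp J f"
proof -
  obtain a b where J: "J = {a..b}" "0 \<le> a" "a \<le> b" "b \<le> 1" using intervals_D[OF assms(1)] by blast
  have "bdd_above ((\<lambda>p. p * f True + (1 - p) * f False) ` J)"
  proof (rule bdd_aboveI2)
    fix p assume "p \<in> J"
    then have p: "0 \<le> p" "p \<le> 1" using J by auto
    have "p * f True \<le> p * \<bar>f True\<bar>" using p(1) by (intro mult_left_mono) simp_all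
    also have "\<dots> \<le> 1 * \<bar>f True\<bar>" using p(2) by (intro mult_right_mono) simp_all
    finally have 1: "p * f True \<le> \<bar>f True\<bar>" by simp
    have "(1 - p) * f False \<le> (1 - p) * \<bar>f False\<bar>" using p(2) by (intro mult_left_mono) simp_all
    also have "\<dots> \<le> 1 * \<bar>f False\<bar>" using p(1) by (intro mult_right_mono) simp_all
    finally have 2: "(1 - p) * f False \<le> \<bar>f False\<bar>" by simp
    from 1 2 show "p * f True + (1 - p) * f False \<le> \<bar>f True\<bar> + \<bar>f False\<bar>" by linarith
  qed
  then show ?thesis unfolding upper_exp_def using assms(2) by (auto intro!: cSup_upper)
qed

definition extu :: "bool list \<Rightarrow> bool list \<Rightarrow> bool" where
  "extu u s \<longleftrightarrow> length u \<le> length s \<and> take (length u) s = u"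
definition stp :: "bool list \<Rightarrow> (bool list \<Rightarrow> bool) \<Rightarrow> bool list \<Rightarrow> nat" where
  "stp u P s = (LEAST m. length s \<le> m \<or> (length u \<le> m \<and> \<not> P (take m s)))"
definition okP :: "bool list \<Rightarrow> (bool list \<Rightarrow> bool) \<Rightarrow> bool list \<Rightarrow> bool" where
  "okP u P s \<longleftrightarrow> (\<forall>m. length u \<le> m \<and> m \<le> length s \<longrightarrow> P (take m s))"
definition Tp :: "bool list \<Rightarrow> (bool list \<Rightarrow> bool) \<Rightarrow> real \<Rightarrow> (bool list \<Rightarrow> real) \<Rightarrow> bool list \<Rightarrow> real" where
  "Tp u P \<rho> T s = (if extu u s then \<rho> * T (take (stp u P s) s) else 1)"

lemma take_snoc: "m \<le> length s \<Longrightarrow> take m (s @ [x]) = take m s"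
  by simp

lemma stp_le: "stp u P s \<le> length s"
  unfolding stp_def by (rule Least_le) simp

lemma stp_ok: "okP u P s \<Longrightarrow> stp u P s = length s"
  unfolding stp_def okP_def
  by (rule Least_equality) (auto simp: not_le intro: ccontr)

lemma stp_snoc_ok: "okP u P s \<Longrightarrow> stp u P (s @ [x]) = Suc (length s)"
  unfolding stp_def
proof (rule Least_equality)
  assume ok: "okP u P s"
  show "length (s @ [x]) \<le> Suc (length s) \<or> length u \<le> Suc (length s) \<and> \<not> P (take (Suc (length s)) (s @ [x]))"
    by simp
  fix y assume y: "length (s @ [x]) \<le> y \<or> length u \<le> y \<and> \<not> P (take y (s @ [x]))"
  show "Suc (length s) \<le> y"
  proof (rule ccontr)
    assume "\<not> Suc (length s) \<le> y"
    then have "y \<le> length s" by simp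
    then show False using y ok unfolding okP_def by (auto simp: take_snoc)
  qed
qed

lemma stp_snoc_nok:
  assumes nok: "\<not> okP u P s"
  shows "stp u P (s @ [x]) = stp u P s"
proof -
  obtain m0 where m0: "length u \<le> m0" "m0 \<le> length s" "\<not> P (take m0 s)"
    using nok unfolding okP_def by blast
  define m1 where "m1 = (LEAST m. length u \<le> m \<and> \<not> P (take m s))"
  have c1: "length u \<le> m1 \<and> \<not> P (take m1 s)" unfolding m1_def by (rule LeastI[of _ m0]) (use m0 in simp)
  have m1le: "m1 \<le> m0" unfolding m1_def by (rule Least_le) (use m0 in simp)
  have min: "\<not> (length u \<le> m \<and> \<not> P (take m s))" if "m < m1" for m
    using that unfolding m1_def by (rule not_less_Least)
  have a: "stp u P s = m1" unfolding stp_def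
  proof (rule Least_equality)
    show "length s \<le> m1 \<or> length u \<le> m1 \<and> \<not> P (take m1 s)" using c1 by simp
    fix y assume y: "length s \<le> y \<or> length u \<le> y \<and> \<not> P (take y s)"
    show "m1 \<le> y"
    proof (rule ccontr)
      assume "\<not> m1 \<le> y" then have "y < m1" by simp
      then show False using y min[of y] m1le m0(2) by auto
    qed
  qed
  have b: "stp u P (s @ [x]) = m1" unfolding stp_def
  proof (rule Least_equality)
    show "length (s @ [x]) \<le> m1 \<or> length u \<le> m1 \<and> \<not> P (take m1 (s @ [x]))"
      using c1 m1le m0(2) by (simp add: take_snoc)
    fix y assume y: "length (s @ [x]) \<le> y \<or> length u \<le> y \<and> \<not> P (take y (s @ [x]))"
    show "m1 \<le> y"
    proof (rule ccontr)
      assume "\<not> m1 \<le> y" then have "y < m1" by simp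
      then have "y \<le> length s" using m1le m0(2) by simp
      then show False using y min[of y] \<open>y < m1\<close> by (auto simp: take_snoc)
    qed
  qed
  show ?thesis using a b by simp
qed

lemma okP_P: "okP u P s \<Longrightarrow> length u \<le> length s \<Longrightarrow> P s"
  unfolding okP_def by (metis order_refl take_all)

lemma extu_snoc: "length u \<le> length s \<Longrightarrow> extu u (s @ [x]) \<longleftrightarrow> extu u s"
  unfolding extu_def by (auto simp: take_snoc)

lemma extu_short: "length s < length u \<Longrightarrow> extu u (s @ [x]) \<Longrightarrow> s @ [x] = u"
  unfolding extu_def by auto

lemma Tp_supermart:
  assumes I: "I \<in> intervals" and fs: "forecasting_system \<phi>"
    and incl: "\<And>s. P s \<Longrightarrow> \<phi> s \<subseteq> I" and u: "u \<noteq> []"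
    and T: "test_supermartingale (\<lambda>_. I) T" and \<rho>: "0 < \<rho>" "\<rho> * T u \<le> 1"
  shows "test_supermartingale \<phi> (Tp u P \<rho> T)"
proof -
  have Tnn: "\<And>s. 0 \<le> T s" using T unfolding test_supermartingale_def by auto
  have Tsm: "\<And>s. upper_exp I (\<lambda>x. T (s @ [x]) - T s) \<le> 0"
    using T unfolding test_supermartingale_def supermartingale_def by auto
  have nn: "0 \<le> Tp u P \<rho> T s" for s using Tnn \<rho> by (simp add: Tp_def)
  have nil: "Tp u P \<rho> T [] = 1" using u by (simp add: Tp_def extu_def)
  have sm: "upper_exp (\<phi> s) (\<lambda>x. Tp u P \<rho> T (s @ [x]) - Tp u P \<rho> T s) \<le> 0" for s
  proof -
    obtain a b where ab: "\<phi> s = {a..b}" "0 \<le> a" "a \<le> b" "b \<le> 1"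
      using intervals_D fs unfolding forecasting_system_def by blast
    have ne: "\<phi> s \<noteq> {}" using ab by simp
    have p01: "0 \<le> p \<and> p \<le> 1" if "p \<in> \<phi> s" for p using that ab by auto
    show ?thesis
    proof (rule ue_le0[OF ne])
      fix p assume p: "p \<in> \<phi> s"
      let ?T = "Tp u P \<rho> T"
      show "p * (?T (s @ [True]) - ?T s) + (1 - p) * (?T (s @ [False]) - ?T s) \<le> 0"
      proof (cases "length u \<le> length s")
        case long: True
        show ?thesis
        proof (cases "extu u s")
          case e: True
          show ?thesis
          proof (cases "okP u P s")
            case ok: True
            have Ps: "P s" using okP_P[OF ok long] .
            have pI: "p \<in> I" using incl[OF Ps] p by blast
            have eq: "?T (s @ [x]) - ?T s = \<rho> * (T (s @ [x]) - T s)" for x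
              using e ok long by (simp add: Tp_def extu_snoc stp_snoc_ok stp_ok right_diff_distrib)
            have "p * (T (s @ [True]) - T s) + (1 - p) * (T (s @ [False]) - T s) \<le> 0"
              using ue_ge[OF I pI, of "\<lambda>x. T (s @ [x]) - T s"] Tsm[of s] by simp
            then have "\<rho> * (p * (T (s @ [True]) - T s) + (1 - p) * (T (s @ [False]) - T s)) \<le> 0"
              using \<rho>(1) by (simp add: mult_nonneg_nonpos)
            then show ?thesis unfolding eq by (simp add: algebra_simps)
          next
            case nok: False
            have eq: "?T (s @ [x]) = ?T s" for x
              using e nok long stp_le[of u P s] by (simp add: Tp_def extu_snoc stp_snoc_nok take_snoc)
            show ?thesis unfolding eq by simp
          qed
        next
          case ne: False
          have eq: "?T (s @ [x]) = ?T s" for x using ne long by (simp add: Tp_def extu_snoc)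
          show ?thesis unfolding eq by simp
        qed
      next
        case short: False
        then have ns: "\<not> extu u s" by (simp add: extu_def)
        have le: "?T (s @ [x]) - ?T s \<le> 0" for x
        proof (cases "extu u (s @ [x])")
          case True
          then have su: "s @ [x] = u" using extu_short short by simp
          have "stp u P u = length u"
            unfolding stp_def by (rule Least_equality) auto
          then show ?thesis using ns True su \<rho>(2) by (simp add: Tp_def)
        next
          case False then show ?thesis using ns by (simp add: Tp_def)
        qed
        have "p * (?T (s @ [True]) - ?T s) \<le> 0" using p01[OF p] le[of True] by (simp add: mult_nonneg_nonpos)
        moreover have "(1 - p) * (?T (s @ [False]) - ?T s) \<le> 0" using p01[OF p] le[of False] by (simp add: mult_nonneg_nonpos)
        ultimately show ?thesis by linarith
      qed
    qed
  qed
  show ?thesis unfolding test_supermartingale_def supermartingale_def using nn nil sm by blast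
qed

lemma pre_take: "m \<le> n \<Longrightarrow> take m (pre \<omega> n) = pre \<omega> m"
  unfolding pre_def by (simp add: take_map)

lemma length_pre[simp]: "length (pre \<omega> n) = n"
  unfolding pre_def by simp

lemma Tp_path:
  assumes "\<And>n. N \<le> n \<Longrightarrow> P (pre \<omega> n)" "N \<le> n"
  shows "Tp (pre \<omega> N) P \<rho> T (pre \<omega> n) = \<rho> * T (pre \<omega> n)"
proof -
  have e: "extu (pre \<omega> N) (pre \<omega> n)" using assms(2) by (simp add: extu_def pre_take)
  have ok: "okP (pre \<omega> N) P (pre \<omega> n)" unfolding okP_def using assms by (auto simp: pre_take)
  show ?thesis using e stp_ok[OF ok] by (simp add: Tp_def)
qed


lemma recfn_rec1: "recursive_fn g \<longleftrightarrow> rec1 g"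
proof
  assume "recursive_fn g"
  then obtain p where p: "\<And>x. rf_eval p [x] (g x)" unfolding recursive_fn_def by blast
  show "rec1 g" unfolding rec1_def rfn_def
    by (rule exI[of _ p]) (auto simp: len1 p)
next
  assume "rec1 g"
  then obtain p where p: "\<And>xs. length xs = 1 \<Longrightarrow> rf_eval p xs (g (hd xs))" unfolding rec1_def rfn_def by blast
  show "recursive_fn g" unfolding recursive_fn_def
  proof (intro exI[of _ p] allI)
    fix x show "rf_eval p [x] (g x)" using p[of "[x]"] by simp
  qed
qed

lemma enc_sit_take[simp]: "ltake m (enc_sit s) = enc_sit (take m s)"
  by (simp add: enc_sit_def take_map)
lemma enc_sit_len[simp]: "llen (enc_sit s) = length s"
  by (simp add: enc_sit_def)
lemma enc_sit_inj[simp]: "enc_sit s = enc_sit t \<longleftrightarrow> s = t"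
proof
  assume "enc_sit s = enc_sit t"
  then have "map (of_bool :: bool \<Rightarrow> nat) s = map of_bool t" by (simp add: enc_sit_def list_encode_eq)
  moreover have "inj (of_bool :: bool \<Rightarrow> nat)" by (auto simp: inj_def)
  ultimately show "s = t" by (simp add: inj_map_eq_map)
qed simp

definition extc :: "bool list \<Rightarrow> nat \<Rightarrow> bool" where
  "extc u c \<longleftrightarrow> length u \<le> llen c \<and> ltake (length u) c = enc_sit u"
definition stpc :: "bool list \<Rightarrow> (nat \<Rightarrow> bool) \<Rightarrow> nat \<Rightarrow> nat" where
  "stpc u Qc c = (LEAST m. llen c \<le> m \<or> (length u \<le> m \<and> \<not> Qc (ltake m c)))"

lemma extc_enc[simp]: "extc u (enc_sit s) \<longleftrightarrow> extu u s"
  by (simp add: extc_def extu_def)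

lemma stpc_enc: "(\<And>s. Qc (enc_sit s) \<longleftrightarrow> P s) \<Longrightarrow> stpc u Qc (enc_sit s) = stp u P s"
  by (simp add: stpc_def stp_def)

lemma recP_extc: "recP (extc u)"
  unfolding extc_def
  by (rule recP_conj[OF recP_le[OF rec1_const rec1_llen] recP_eq[OF rec1_ltake[OF rec1_const rec1_id] rec1_const]])

lemma rec1_stpc:
  assumes Q: "recP Qc"
  shows "rec1 (stpc u Qc)"
proof -
  have "recP (\<lambda>z. llen (psnd z) \<le> pfst z \<or> (length u \<le> pfst z \<and> \<not> Qc (ltake (pfst z) (psnd z))))"
    by (rule recP_disj[OF recP_le[OF rec1_comp[OF rec1_llen rec1_psnd] rec1_pfst]
          recP_conj[OF recP_le[OF rec1_const rec1_pfst] recP_not[OF recP_comp[OF Q rec1_ltake[OF rec1_pfst rec1_psnd]]]]])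
  then have "rec1 (\<lambda>c. LEAST m. llen c \<le> m \<or> (length u \<le> m \<and> \<not> Qc (ltake m c)))"
    by (rule rec1_least) auto
  then show ?thesis unfolding stpc_def .
qed

lemma of_rat_div_nat: "(of_rat (q / of_nat K) :: real) = of_rat q / real K"
  by (simp add: of_rat_divide)

lemma div_nat_le_self:
  assumes "0 \<le> (a::real)" "0 < K" shows "a / real K \<le> a"
proof -
  have "1 \<le> real K" using assms(2) by simp
  then have "a * 1 \<le> a * real K" using assms(1) by (rule mult_left_mono)
  then show ?thesis using assms(2) by (simp add: divide_le_eq)
qed

lemma comp_Tp:
  assumes Q: "recP Qc" "\<And>s. Qc (enc_sit s) \<longleftrightarrow> P s" and K: "0 < K"
    and T: "computable_real enc_sit T"
  shows "computable_real enc_sit (Tp u P (1 / real K) T)"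
proof -
  obtain q g where g: "recursive_fn g" "\<And>d n. g (prod_encode (enc_sit d, n)) = enc_rat (q d n)"
    and qa: "\<And>d n. \<bar>T d - of_rat (q d n)\<bar> < (1/2) ^ n"
    using T unfolding computable_real_def recursive_rat_map_def by blast
  define q' where "q' s n = (if extu u s then q (take (stp u P s) s) n / of_nat K else 1)" for s n
  define g' where "g' z = (if extc u (pfst z) then scalefn K (g (prod_encode (ltake (stpc u Qc (pfst z)) (pfst z), psnd z)))
      else enc_rat 1)" for z
  have rg: "rec1 g" using g(1) by (simp add: recfn_rec1)
  have "rec1 g'" unfolding g'_def
    by (rule rec1_if[OF recP_comp[OF recP_extc rec1_pfst] rec1_comp[OF rec1_scalefn rec1_comp[OF rg
          rec1_pair[OF rec1_ltake[OF rec1_comp[OF rec1_stpc[OF Q(1)] rec1_pfst] rec1_pfst] rec1_psnd]]] rec1_const])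
  moreover have "g' (prod_encode (enc_sit s, n)) = enc_rat (q' s n)" for s n
    by (simp add: g'_def q'_def stpc_enc[of Qc P, OF Q(2)] g(2) scalefn_correct[OF K])
  moreover have "\<bar>Tp u P (1 / real K) T s - of_rat (q' s n)\<bar> < (1/2) ^ n" for s n
  proof (cases "extu u s")
    case True
    let ?t = "take (stp u P s) s"
    have "\<bar>Tp u P (1 / real K) T s - of_rat (q' s n)\<bar> = \<bar>T ?t - of_rat (q ?t n)\<bar> / real K"
      using True K by (simp add: Tp_def q'_def of_rat_div_nat diff_divide_distrib[symmetric])
    also have "\<dots> \<le> \<bar>T ?t - of_rat (q ?t n)\<bar>" using K by (intro div_nat_le_self) simp_all
    also have "\<dots> < (1/2) ^ n" by (rule qa)
    finally show ?thesis .
  next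
    case False then show ?thesis by (simp add: Tp_def q'_def)
  qed
  ultimately show ?thesis unfolding computable_real_def recursive_rat_map_def
    by (intro exI[of _ q'] conjI exI[of _ g']) (auto simp: recfn_rec1)
qed

lemma lsc_Tp:
  assumes Q: "recP Qc" "\<And>s. Qc (enc_sit s) \<longleftrightarrow> P s" and K: "0 < K"
    and T: "lsc_real enc_sit T"
  shows "lsc_real enc_sit (Tp u P (1 / real K) T)"
proof -
  obtain q g where g: "recursive_fn g" "\<And>d n. g (prod_encode (enc_sit d, n)) = enc_rat (q d n)"
    and qm: "\<And>d n. q d (Suc n) \<ge> q d n" and ql: "\<And>d. (\<lambda>n. real_of_rat (q d n)) \<longlonglongrightarrow> T d"
    using T unfolding lsc_real_def recursive_rat_map_def by blast
  define q' where "q' s n = (if extu u s then q (take (stp u P s) s) n / of_nat K else 1)" for s n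
  define g' where "g' z = (if extc u (pfst z) then scalefn K (g (prod_encode (ltake (stpc u Qc (pfst z)) (pfst z), psnd z)))
      else enc_rat 1)" for z
  have rg: "rec1 g" using g(1) by (simp add: recfn_rec1)
  have "rec1 g'" unfolding g'_def
    by (rule rec1_if[OF recP_comp[OF recP_extc rec1_pfst] rec1_comp[OF rec1_scalefn rec1_comp[OF rg
          rec1_pair[OF rec1_ltake[OF rec1_comp[OF rec1_stpc[OF Q(1)] rec1_pfst] rec1_pfst] rec1_psnd]]] rec1_const])
  moreover have "g' (prod_encode (enc_sit s, n)) = enc_rat (q' s n)" for s n
    by (simp add: g'_def q'_def stpc_enc[of Qc P, OF Q(2)] g(2) scalefn_correct[OF K])
  moreover have "q' s (Suc n) \<ge> q' s n" for s n
    using qm K by (simp add: q'_def divide_right_mono)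
  moreover have "(\<lambda>n. real_of_rat (q' s n)) \<longlonglongrightarrow> Tp u P (1 / real K) T s" for s
  proof (cases "extu u s")
    case True
    let ?t = "take (stp u P s) s"
    have "(\<lambda>n. real_of_rat (q ?t n) / real K) \<longlonglongrightarrow> T ?t / real K"
      by (rule tendsto_divide[OF ql tendsto_const]) (use K in simp)
    then show ?thesis using True by (simp add: Tp_def q'_def of_rat_div_nat)
  next
    case False then show ?thesis by (simp add: Tp_def q'_def)
  qed
  ultimately show ?thesis unfolding lsc_real_def recursive_rat_map_def
    by (intro exI[of _ q'] conjI exI[of _ g']) (auto simp: recfn_rec1)
qed

lemma comp_scale_id:
  assumes K: "0 < K" and T: "computable_real id \<tau>"
  shows "computable_real id (\<lambda>n. \<tau> n / real K)"
proof -
  obtain q g where g: "recursive_fn g" "\<And>d n. g (prod_encode (id d, n)) = enc_rat (q d n)"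
    and qa: "\<And>d n. \<bar>\<tau> d - of_rat (q d n)\<bar> < (1/2) ^ n"
    using T unfolding computable_real_def recursive_rat_map_def by blast
  define q' where "q' d n = q d n / of_nat K" for d n
  have rg: "rec1 g" using g(1) by (simp add: recfn_rec1)
  have "rec1 (\<lambda>z. scalefn K (g z))" by (rule rec1_comp[OF rec1_scalefn rg])
  moreover have "scalefn K (g (prod_encode (id d, n))) = enc_rat (q' d n)" for d n
    using g(2)[of d n] by (simp add: q'_def scalefn_correct[OF K])
  moreover have "\<bar>\<tau> d / real K - of_rat (q' d n)\<bar> < (1/2) ^ n" for d n
  proof -
    have "\<bar>\<tau> d / real K - of_rat (q' d n)\<bar> = \<bar>\<tau> d - of_rat (q d n)\<bar> / real K"
      using K by (simp add: q'_def of_rat_div_nat diff_divide_distrib[symmetric])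
    also have "\<dots> \<le> \<bar>\<tau> d - of_rat (q d n)\<bar>" using K by (intro div_nat_le_self) simp_all
    also have "\<dots> < (1/2) ^ n" by (rule qa)
    finally show ?thesis .
  qed
  ultimately show ?thesis unfolding computable_real_def recursive_rat_map_def
    by (intro exI[of _ q'] conjI exI[of _ "\<lambda>z. scalefn K (g z)"]) (auto simp: recfn_rec1)
qed


definition Dp :: "bool list \<Rightarrow> (bool list \<Rightarrow> bool) \<Rightarrow> (bool list \<Rightarrow> bool \<Rightarrow> real) \<Rightarrow> bool list \<Rightarrow> bool \<Rightarrow> real" where
  "Dp u P D s x = (if extu u s \<and> okP u P s then D s x else 1)"

lemma mult_proc_nil[simp]: "mult_proc D [] = 1"
  by (simp add: mult_proc_def)

lemma mult_proc_snoc: "mult_proc D (s @ [x]) = mult_proc D s * D s x"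
proof -
  have "mult_proc D (s @ [x]) = (\<Prod>k<length s. D (take k (s @ [x])) ((s @ [x]) ! k)) * D (take (length s) (s @ [x])) ((s @ [x]) ! length s)"
    by (simp add: mult_proc_def)
  also have "(\<Prod>k<length s. D (take k (s @ [x])) ((s @ [x]) ! k)) = mult_proc D s"
    unfolding mult_proc_def by (rule prod.cong) (auto simp: nth_append)
  finally show ?thesis by simp
qed

lemma okP_iff: "extu u s \<Longrightarrow> okP u P s \<longleftrightarrow> stp u P s = length s \<and> P s"
proof
  assume e: "extu u s" and ok: "okP u P s"
  then show "stp u P s = length s \<and> P s" using stp_ok[OF ok] okP_P[OF ok] by (simp add: extu_def)
next
  assume e: "extu u s" and h: "stp u P s = length s \<and> P s"
  show "okP u P s" unfolding okP_def
  proof (intro allI impI)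
    fix m assume m: "length u \<le> m \<and> m \<le> length s"
    show "P (take m s)"
    proof (cases "m = length s")
      case True then show ?thesis using h by simp
    next
      case False
      then have "m < stp u P s" using m h by simp
      then have "\<not> (length s \<le> m \<or> (length u \<le> m \<and> \<not> P (take m s)))"
        unfolding stp_def by (rule not_less_Least)
      then show ?thesis using m by simp
    qed
  qed
qed

lemma Dp_prod:
  assumes u: "u \<noteq> []"
  shows "mult_proc D u * mult_proc (Dp u P D) s = (if extu u s then mult_proc D (take (stp u P s) s) else mult_proc D u)"
proof (induction s rule: rev_induct)
  case Nil then show ?case using u by (simp add: extu_def)
next
  case (snoc x s)
  let ?M = "mult_proc D" and ?M' = "mult_proc (Dp u P D)"
  have step: "?M u * ?M' (s @ [x]) = (?M u * ?M' s) * Dp u P D s x"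
    by (simp add: mult_proc_snoc)
  show ?case
  proof (cases "length u \<le> length s")
    case long: True
    show ?thesis
    proof (cases "extu u s")
      case e: True
      show ?thesis
      proof (cases "okP u P s")
        case ok: True
        have d1: "Dp u P D s x = D s x" using e ok by (simp add: Dp_def)
        have "?M u * ?M' (s @ [x]) = ?M s * D s x"
          using step snoc e ok stp_ok[OF ok] unfolding d1 by simp
        then show ?thesis using e ok long by (simp add: extu_snoc stp_snoc_ok mult_proc_snoc)
      next
        case nok: False
        have d1: "Dp u P D s x = 1" using nok by (simp add: Dp_def)
        have "?M u * ?M' (s @ [x]) = ?M (take (stp u P s) s)"
          using step snoc e nok unfolding d1 by simp
        then show ?thesis using e nok long stp_le[of u P s] by (simp add: extu_snoc stp_snoc_nok take_snoc)
      qed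
    next
      case ne: False
      have d1: "Dp u P D s x = 1" using ne by (simp add: Dp_def)
      have "?M u * ?M' (s @ [x]) = ?M u" using step snoc ne unfolding d1 by simp
      then show ?thesis using ne long by (simp add: extu_snoc)
    qed
  next
    case short: False
    then have ns: "\<not> extu u s" by (simp add: extu_def)
    have d1: "Dp u P D s x = 1" using ns by (simp add: Dp_def)
    have "?M u * ?M' (s @ [x]) = ?M u" using step snoc ns unfolding d1 by simp
    moreover have "?M (take (stp u P (s @ [x])) (s @ [x])) = ?M u" if "extu u (s @ [x])"
    proof -
      have su: "s @ [x] = u" using extu_short short that by simp
      have "stp u P u = length u" unfolding stp_def by (rule Least_equality) auto
      then show ?thesis using su by simp
    qed
    ultimately show ?thesis by auto
  qed
qed

lemma Dp_eq_Tp: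
  assumes u: "u \<noteq> []" and pos: "0 < mult_proc D u"
  shows "mult_proc (Dp u P D) = Tp u P (1 / mult_proc D u) (mult_proc D)"
proof
  fix s
  have "mult_proc D u * mult_proc (Dp u P D) s = mult_proc D u * Tp u P (1 / mult_proc D u) (mult_proc D) s"
    using Dp_prod[OF u, of D P s] pos by (simp add: Tp_def)
  then show "mult_proc (Dp u P D) s = Tp u P (1 / mult_proc D u) (mult_proc D) s"
    using pos by simp
qed

lemma lsc_Dp:
  assumes Q: "recP Qc" "\<And>s. Qc (enc_sit s) \<longleftrightarrow> P s"
    and D: "lsc_real enc_sx (\<lambda>(s, x). D s x)"
  shows "lsc_real enc_sx (\<lambda>(s, x). Dp u P D s x)"
proof -
  obtain q g where g: "recursive_fn g" "\<And>d n. g (prod_encode (enc_sx d, n)) = enc_rat (q d n)"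
    and qm: "\<And>d n. q d (Suc n) \<ge> q d n" and ql: "\<And>d. (\<lambda>n. real_of_rat (q d n)) \<longlonglongrightarrow> (case d of (s, x) \<Rightarrow> D s x)"
    using D unfolding lsc_real_def recursive_rat_map_def by blast
  define E where "E c \<longleftrightarrow> extc u c \<and> stpc u Qc c = llen c \<and> Qc c" for c
  have E: "E (enc_sit s) \<longleftrightarrow> extu u s \<and> okP u P s" for s
    unfolding E_def using okP_iff[of u s P] by (auto simp: stpc_enc[of Qc P, OF Q(2)] Q(2))
  have rE: "recP E" unfolding E_def
    by (rule recP_conj[OF recP_extc recP_conj[OF recP_eq[OF rec1_stpc[OF Q(1)] rec1_llen] Q(1)]])
  define q' where "q' d n = (if E (enc_sit (fst d)) then q d n else 1)" for d n
  define g' where "g' z = (if E (pfst (pfst z)) then g z else enc_rat 1)" for z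
  have rg: "rec1 g" using g(1) by (simp add: recfn_rec1)
  have "rec1 g'" unfolding g'_def
    by (rule rec1_if[OF recP_comp[OF rE rec1_comp[OF rec1_pfst rec1_pfst]] rg rec1_const])
  moreover have "g' (prod_encode (enc_sx d, n)) = enc_rat (q' d n)" for d n
    by (simp add: g'_def q'_def enc_sx_def g(2)[of d n, symmetric])
  moreover have "q' d (Suc n) \<ge> q' d n" for d n
    using qm by (simp add: q'_def)
  moreover have "(\<lambda>n. real_of_rat (q' d n)) \<longlonglongrightarrow> (case d of (s, x) \<Rightarrow> Dp u P D s x)" for d
  proof -
    obtain s x where d: "d = (s, x)" by fastforce
    show ?thesis
    proof (cases "extu u s \<and> okP u P s")
      case True then show ?thesis using ql[of d] by (simp add: d q'_def Dp_def E)
    next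
      case False
      then have "(\<lambda>n. real_of_rat (q' d n)) = (\<lambda>n. 1)" by (intro ext) (auto simp: d q'_def E)
      moreover have "Dp u P D s x = 1" using False by (auto simp: Dp_def)
      ultimately show ?thesis by (simp add: d)
    qed
  qed
  ultimately show ?thesis unfolding lsc_real_def recursive_rat_map_def
    by (intro exI[of _ q'] conjI exI[of _ g']) (auto simp: recfn_rec1)
qed


lemma unb_scale:
  assumes "unbounded_on T \<omega>" "0 < \<rho>" "\<And>n. N \<le> n \<Longrightarrow> T' (pre \<omega> n) = \<rho> * T (pre \<omega> n)"
  shows "unbounded_on T' \<omega>"
proof -
  have "limsup (\<lambda>n. ereal (T' (pre \<omega> n))) = limsup (\<lambda>n. ereal \<rho> * ereal (T (pre \<omega> n)))"
    by (rule Limsup_eq) (use assms(3) in \<open>auto simp: eventually_sequentially\<close>)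
  also have "\<dots> = ereal \<rho> * limsup (\<lambda>n. ereal (T (pre \<omega> n)))"
    by (rule limsup_ereal_mult_left) (use assms(2) in simp)
  also have "\<dots> = \<infinity>" using assms(1,2) unfolding unbounded_on_def by simp
  finally show ?thesis unfolding unbounded_on_def .
qed

lemma K_bound:
  assumes "0 \<le> (t::real)"
  shows "0 < nat \<lceil>t\<rceil> + 1" "1 / real (nat \<lceil>t\<rceil> + 1) * t \<le> 1"
proof -
  show "0 < nat \<lceil>t\<rceil> + 1" by simp
  have "t \<le> real (nat \<lceil>t\<rceil>)" using assms by linarith
  then have "t \<le> real (nat \<lceil>t\<rceil> + 1)" by simp
  then show "1 / real (nat \<lceil>t\<rceil> + 1) * t \<le> 1" by (simp add: divide_le_eq)
qed

lemma pre_Suc: "pre \<omega> (Suc n) = pre \<omega> n @ [\<omega> n]"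
  by (simp add: pre_def)

locale tsetup =
  fixes I \<phi> P Qc N \<omega>
  assumes I: "I \<in> intervals" and fs: "forecasting_system \<phi>"
    and incl: "\<And>s. P s \<Longrightarrow> \<phi> s \<subseteq> I" and Q: "recP Qc" and QP: "\<And>s. Qc (enc_sit s) \<longleftrightarrow> P s"
    and ev: "\<And>n. N \<le> n \<Longrightarrow> P (pre \<omega> n)" and N: "0 < N"
begin

definition "u = pre \<omega> N"
lemma u: "u \<noteq> []" using N by (simp add: u_def pre_def)
lemma path: "N \<le> n \<Longrightarrow> Tp u P \<rho> T (pre \<omega> n) = \<rho> * T (pre \<omega> n)"
  unfolding u_def by (rule Tp_path[of N P \<omega>, OF ev])

lemma transfer_ML: "random R_ML \<phi> \<omega> \<Longrightarrow> random R_ML (\<lambda>_. I) \<omega>"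
proof (rule ccontr)
  assume r: "random R_ML \<phi> \<omega>" and "\<not> random R_ML (\<lambda>_. I) \<omega>"
  then obtain T where T: "lsc_real enc_sit T" "test_supermartingale (\<lambda>_. I) T" "unbounded_on T \<omega>" by auto
  define K where "K = nat \<lceil>T u\<rceil> + 1"
  have Tu: "0 \<le> T u" using T(2) unfolding test_supermartingale_def by auto
  have K: "0 < K" "1 / real K * T u \<le> 1" using K_bound[OF Tu] unfolding K_def by auto
  have "lsc_real enc_sit (Tp u P (1 / real K) T)" by (rule lsc_Tp[OF Q QP K(1) T(1)])
  moreover have "test_supermartingale \<phi> (Tp u P (1 / real K) T)"
    by (rule Tp_supermart[OF I fs incl u T(2)]) (use K in auto)
  moreover have "unbounded_on (Tp u P (1 / real K) T) \<omega>"
    by (rule unb_scale[OF T(3), of "1 / real K" N]) (use K path in auto)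
  ultimately show False using r by auto
qed

lemma transfer_C: "random R_C \<phi> \<omega> \<Longrightarrow> random R_C (\<lambda>_. I) \<omega>"
proof (rule ccontr)
  assume r: "random R_C \<phi> \<omega>" and "\<not> random R_C (\<lambda>_. I) \<omega>"
  then obtain T where T: "computable_real enc_sit T" "test_supermartingale (\<lambda>_. I) T" "unbounded_on T \<omega>" by auto
  define K where "K = nat \<lceil>T u\<rceil> + 1"
  have Tu: "0 \<le> T u" using T(2) unfolding test_supermartingale_def by auto
  have K: "0 < K" "1 / real K * T u \<le> 1" using K_bound[OF Tu] unfolding K_def by auto
  have "computable_real enc_sit (Tp u P (1 / real K) T)" by (rule comp_Tp[OF Q QP K(1) T(1)])
  moreover have "test_supermartingale \<phi> (Tp u P (1 / real K) T)"
    by (rule Tp_supermart[OF I fs incl u T(2)]) (use K in auto)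
  moreover have "unbounded_on (Tp u P (1 / real K) T) \<omega>"
    by (rule unb_scale[OF T(3), of "1 / real K" N]) (use K path in auto)
  ultimately show False using r by auto
qed

lemma transfer_S: "random R_S \<phi> \<omega> \<Longrightarrow> random R_S (\<lambda>_. I) \<omega>"
proof (rule ccontr)
  assume r: "random R_S \<phi> \<omega>" and "\<not> random R_S (\<lambda>_. I) \<omega>"
  then obtain T \<tau> where T: "computable_real enc_sit T" "test_supermartingale (\<lambda>_. I) T"
    and \<tau>: "computable_real id \<tau>" "mono \<tau>" "\<And>n. \<tau> n \<ge> 0" "\<not> bdd_above (range \<tau>)"
    and ls: "limsup (\<lambda>n. ereal (T (pre \<omega> n) - \<tau> n)) \<ge> 0" by auto
  define K where "K = nat \<lceil>T u\<rceil> + 1"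
  have Tu: "0 \<le> T u" using T(2) unfolding test_supermartingale_def by auto
  have K: "0 < K" "1 / real K * T u \<le> 1" using K_bound[OF Tu] unfolding K_def by auto
  define \<tau>' where "\<tau>' n = \<tau> n / real K" for n
  have f1: "computable_real enc_sit (Tp u P (1 / real K) T)" by (rule comp_Tp[OF Q QP K(1) T(1)])
  have f2: "test_supermartingale \<phi> (Tp u P (1 / real K) T)"
    by (rule Tp_supermart[OF I fs incl u T(2)]) (use K in auto)
  have f3: "computable_real id \<tau>'" unfolding \<tau>'_def by (rule comp_scale_id[OF K(1) \<tau>(1)])
  have f4: "mono \<tau>'" unfolding \<tau>'_def
    by (rule monoI) (use \<tau>(2) K in \<open>auto simp: mono_def divide_right_mono\<close>)
  have f5: "\<forall>n. \<tau>' n \<ge> 0" unfolding \<tau>'_def using \<tau>(3) by simp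
  have f6: "\<not> bdd_above (range \<tau>')"
  proof
    assume "bdd_above (range \<tau>')"
    then obtain B where B: "\<And>n. \<tau>' n \<le> B" by (auto simp: bdd_above_def)
    have "\<tau> n \<le> B * real K" for n using B[of n] K(1) by (simp add: \<tau>'_def divide_le_eq)
    then have "bdd_above (range \<tau>)" by (intro bdd_aboveI[of _ "B * real K"]) auto
    then show False using \<tau>(4) by simp
  qed
  have f7: "limsup (\<lambda>n. ereal (Tp u P (1 / real K) T (pre \<omega> n) - \<tau>' n)) \<ge> 0"
  proof -
    have "limsup (\<lambda>n. ereal (Tp u P (1 / real K) T (pre \<omega> n) - \<tau>' n))
        = limsup (\<lambda>n. ereal (1 / real K) * ereal (T (pre \<omega> n) - \<tau> n))"
      by (rule Limsup_eq) (auto simp: eventually_sequentially path \<tau>'_def diff_divide_distrib intro!: exI[of _ N])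
    also have "\<dots> = ereal (1 / real K) * limsup (\<lambda>n. ereal (T (pre \<omega> n) - \<tau> n))"
      by (rule limsup_ereal_mult_left) simp
    finally show ?thesis using ls by (simp add: ereal_zero_le_0_iff)
  qed
  have ex: "\<exists>T \<tau>. computable_real enc_sit T \<and> test_supermartingale \<phi> T
           \<and> computable_real id \<tau> \<and> mono \<tau> \<and> (\<forall>n. \<tau> n \<ge> 0) \<and> \<not> bdd_above (range \<tau>)
           \<and> limsup (\<lambda>n. ereal (T (pre \<omega> n) - \<tau> n)) \<ge> 0"
    by (rule exI[of _ "Tp u P (1 / real K) T"], rule exI[of _ \<tau>']) (use f1 f2 f3 f4 f5 f6 f7 in blast)
  show False using r ex unfolding random.simps by blast
qed

lemma transfer_wML: "random R_wML \<phi> \<omega> \<Longrightarrow> random R_wML (\<lambda>_. I) \<omega>"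
proof (rule ccontr)
  assume r: "random R_wML \<phi> \<omega>" and "\<not> random R_wML (\<lambda>_. I) \<omega>"
  then obtain D where D: "lsc_real enc_sx (\<lambda>(s, x). D s x)" "test_supermartingale (\<lambda>_. I) (mult_proc D)"
    "unbounded_on (mult_proc D) \<omega>" by auto
  have Mu: "0 < mult_proc D u"
  proof (rule ccontr)
    assume "\<not> 0 < mult_proc D u"
    moreover have "0 \<le> mult_proc D u" using D(2) unfolding test_supermartingale_def by auto
    ultimately have z: "mult_proc D u = 0" by simp
    have "mult_proc D (pre \<omega> n) = 0" if "N \<le> n" for n
      using that
    proof (induction n rule: nat_induct_at_least)
      case base then show ?case using z by (simp add: u_def)
    next
      case (Suc n) then show ?case by (simp add: pre_Suc mult_proc_snoc)
    qed
    then have "limsup (\<lambda>n. ereal (mult_proc D (pre \<omega> n))) = limsup (\<lambda>n. 0)"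
      by (intro Limsup_eq) (auto simp: eventually_sequentially intro!: exI[of _ N])
    also have "\<dots> = 0" by (simp add: Limsup_const)
    finally show False using D(3) unfolding unbounded_on_def by simp
  qed
  have eq: "mult_proc (Dp u P D) = Tp u P (1 / mult_proc D u) (mult_proc D)" by (rule Dp_eq_Tp[OF u Mu])
  have "lsc_real enc_sx (\<lambda>(s, x). Dp u P D s x)" by (rule lsc_Dp[OF Q QP D(1)])
  moreover have "test_supermartingale \<phi> (mult_proc (Dp u P D))"
    unfolding eq by (rule Tp_supermart[OF I fs incl u D(2)]) (use Mu in auto)
  moreover have "unbounded_on (mult_proc (Dp u P D)) \<omega>"
    unfolding eq by (rule unb_scale[OF D(3), of "1 / mult_proc D u" N]) (use Mu path in auto)
  ultimately show False using r by auto
qed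

end


lemma sum_lb:
  fixes f :: "nat \<Rightarrow> real"
  assumes "\<And>k. f k \<ge> (if k < N then -1 else 0)"
  shows "(\<Sum>k<n. f k) \<ge> - real N"
proof -
  have "(\<Sum>k<n. f k) \<ge> - real (min n N)"
  proof (induction n)
    case 0 then show ?case by simp
  next
    case (Suc n)
    have "f n \<ge> (if n < N then -1 else 0)" by (rule assms)
    then show ?case using Suc by (cases "n < N") (auto simp: min_def split: if_splits)
  qed
  moreover have "- real N \<le> - real (min n N)" by simp
  ultimately show ?thesis by linarith
qed

lemma liminf_transfer:
  fixes A E c :: "nat \<Rightarrow> real"
  assumes c: "filterlim c at_top sequentially" and A: "0 \<le> liminf (\<lambda>n. ereal (A n / c n))"
    and E: "\<And>n. - M \<le> E n"
  shows "0 \<le> liminf (\<lambda>n. ereal ((A n + E n) / c n))"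
  unfolding le_Liminf_iff
proof (intro allI impI)
  fix y :: ereal assume "y < 0"
  obtain r where r: "y < ereal r" "ereal r < 0" using ereal_dense2[OF \<open>y < 0\<close>] by blast
  then have r0: "r < 0" by simp
  have "ereal (r / 2) < 0" using r0 by simp
  then have e1: "eventually (\<lambda>n. ereal (r / 2) < ereal (A n / c n)) sequentially"
    using A unfolding le_Liminf_iff by blast
  define Z where "Z = 2 * (\<bar>M\<bar> + 1) / (- r)"
  have Z0: "0 < Z" unfolding Z_def by (rule divide_pos_pos) (use r0 in auto)
  have e2: "eventually (\<lambda>n. Z \<le> c n) sequentially" using c unfolding filterlim_at_top by blast
  show "eventually (\<lambda>n. y < ereal ((A n + E n) / c n)) sequentially"
    using e1 e2
  proof eventually_elim
    fix n assume h1: "ereal (r / 2) < ereal (A n / c n)" and h2: "Z \<le> c n"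
    have cp: "0 < c n" using Z0 h2 by linarith
    have a: "r / 2 < A n / c n" using h1 by simp
    have b: "- \<bar>M\<bar> / c n \<le> E n / c n" using E[of n] cp by (intro divide_right_mono) auto
    have "\<bar>M\<bar> / c n \<le> \<bar>M\<bar> / Z" using cp Z0 h2 by (intro divide_left_mono) auto
    moreover have "\<bar>M\<bar> / Z < - r / 2"
    proof -
      have "(- r / 2) * Z = \<bar>M\<bar> + 1" using r0 by (simp add: Z_def field_simps)
      then have "\<bar>M\<bar> < (- r / 2) * Z" by simp
      then show ?thesis using Z0 by (simp add: pos_divide_less_eq)
    qed
    ultimately have "- \<bar>M\<bar> / c n > r / 2" by simp
    then have "r < A n / c n + E n / c n" using a b by linarith
    then have "r < (A n + E n) / c n" by (simp add: add_divide_distrib)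
    then show "y < ereal ((A n + E n) / c n)" using r(1) by (meson ereal_less_eq(3) less_le_trans order.strict_implies_order)
  qed
qed

lemma limsup_transfer:
  fixes A E c :: "nat \<Rightarrow> real"
  assumes c: "filterlim c at_top sequentially" and A: "limsup (\<lambda>n. ereal (A n / c n)) \<le> 0"
    and E: "\<And>n. E n \<le> M"
  shows "limsup (\<lambda>n. ereal ((A n + E n) / c n)) \<le> 0"
  unfolding Limsup_le_iff
proof (intro allI impI)
  fix y :: ereal assume "0 < y"
  obtain r where r: "ereal r < y" "0 < ereal r" using ereal_dense2[OF \<open>0 < y\<close>] by blast
  then have r0: "0 < r" by simp
  have "0 < ereal (r / 2)" using r0 by simp
  then have e1: "eventually (\<lambda>n. ereal (A n / c n) < ereal (r / 2)) sequentially"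
    using A unfolding Limsup_le_iff by blast
  define Z where "Z = 2 * (\<bar>M\<bar> + 1) / r"
  have Z0: "0 < Z" unfolding Z_def by (rule divide_pos_pos) (use r0 in auto)
  have e2: "eventually (\<lambda>n. Z \<le> c n) sequentially" using c unfolding filterlim_at_top by blast
  show "eventually (\<lambda>n. ereal ((A n + E n) / c n) < y) sequentially"
    using e1 e2
  proof eventually_elim
    fix n assume h1: "ereal (A n / c n) < ereal (r / 2)" and h2: "Z \<le> c n"
    have cp: "0 < c n" using Z0 h2 by linarith
    have a: "A n / c n < r / 2" using h1 by simp
    have b: "E n / c n \<le> \<bar>M\<bar> / c n" using E[of n] cp by (intro divide_right_mono) auto
    have "\<bar>M\<bar> / c n \<le> \<bar>M\<bar> / Z" using cp Z0 h2 by (intro divide_left_mono) auto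
    moreover have "\<bar>M\<bar> / Z < r / 2"
    proof -
      have "(r / 2) * Z = \<bar>M\<bar> + 1" using r0 by (simp add: Z_def field_simps)
      then have "\<bar>M\<bar> < (r / 2) * Z" by simp
      then show ?thesis using Z0 by (simp add: pos_divide_less_eq)
    qed
    ultimately have "\<bar>M\<bar> / c n < r / 2" by linarith
    then have "A n / c n + E n / c n < r" using a b by linarith
    then have "(A n + E n) / c n < r" by (simp add: add_divide_distrib)
    then show "ereal ((A n + E n) / c n) < y" using r(1) by (meson ereal_less_eq(3) le_less_trans order.strict_implies_order)
  qed
qed

lemma fs_interval:
  assumes "forecasting_system \<phi>"
  shows "\<phi> s = {lower_fc \<phi> s..upper_fc \<phi> s} \<and> 0 \<le> lower_fc \<phi> s \<and> lower_fc \<phi> s \<le> upper_fc \<phi> s \<and> upper_fc \<phi> s \<le> 1"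
proof -
  obtain a b where ab: "\<phi> s = {a..b}" "0 \<le> a" "a \<le> b" "b \<le> 1"
    using intervals_D assms unfolding forecasting_system_def by blast
  then show ?thesis by (simp add: lower_fc_def upper_fc_def)
qed

lemma ch_transfer:
  assumes I: "I \<in> intervals" and fs: "forecasting_system \<phi>"
    and ev: "\<And>n. N \<le> n \<Longrightarrow> \<phi> (pre \<omega> n) \<subseteq> I" and ch: "CH_condition \<phi> \<omega> Sel"
  shows "CH_condition (\<lambda>_. I) \<omega> Sel"
  unfolding CH_condition_def
proof (intro impI conjI)
  assume c: "filterlim (sel_count Sel \<omega>) at_top sequentially"
  obtain a b where ab: "I = {a..b}" "0 \<le> a" "a \<le> b" "b \<le> 1" using intervals_D[OF I] by blast
  have fsI: "forecasting_system (\<lambda>_. I)" using I by (simp add: forecasting_system_def)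
  have lo: "lower_fc (\<lambda>_. I) s = a" for s using ab by (simp add: lower_fc_def)
  have hi: "upper_fc (\<lambda>_. I) s = b" for s using ab by (simp add: upper_fc_def)
  define l where "l k = lower_fc \<phi> (pre \<omega> k)" for k
  define h where "h k = upper_fc \<phi> (pre \<omega> k)" for k
  have lh: "0 \<le> l k \<and> l k \<le> h k \<and> h k \<le> 1" for k using fs_interval[OF fs] by (simp add: l_def h_def)
  have lN: "a \<le> l k \<and> h k \<le> b" if "N \<le> k" for k
  proof -
    have "{l k..h k} \<subseteq> {a..b}" using ev[OF that] fs_interval[OF fs, of "pre \<omega> k"] ab(1) by (simp add: l_def h_def)
    then show ?thesis using lh[of k] by auto
  qed
  from ch c have chl: "0 \<le> liminf (\<lambda>n. ereal ((\<Sum>k<n. (of_bool (Sel (pre \<omega> k)) :: real) * (of_bool (\<omega> k) - l k)) / sel_count Sel \<omega> n))"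
    and chu: "limsup (\<lambda>n. ereal ((\<Sum>k<n. (of_bool (Sel (pre \<omega> k)) :: real) * (of_bool (\<omega> k) - h k)) / sel_count Sel \<omega> n)) \<le> 0"
    unfolding CH_condition_def l_def h_def by auto
  have El: "- real N \<le> (\<Sum>k<n. (of_bool (Sel (pre \<omega> k)) :: real) * (l k - a))" for n
  proof (rule sum_lb)
    fix k show "(if k < N then -1 else 0) \<le> (of_bool (Sel (pre \<omega> k)) :: real) * (l k - a)"
      using  lh[of k] ab lN[of k] by auto
  qed
  have Eu: "(\<Sum>k<n. (of_bool (Sel (pre \<omega> k)) :: real) * (h k - b)) \<le> real N" for n
  proof -
    have "- real N \<le> (\<Sum>k<n. - ((of_bool (Sel (pre \<omega> k)) :: real) * (h k - b)))"
    proof (rule sum_lb)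
      fix k show "(if k < N then -1 else 0) \<le> - ((of_bool (Sel (pre \<omega> k)) :: real) * (h k - b))"
        using  lh[of k] ab lN[of k] by auto
    qed
    then show ?thesis by (simp add: sum_negf)
  qed
  have eql: "(\<Sum>k<n. (of_bool (Sel (pre \<omega> k)) :: real) * (of_bool (\<omega> k) - a)) = (\<Sum>k<n. (of_bool (Sel (pre \<omega> k)) :: real) * (of_bool (\<omega> k) - l k)) + (\<Sum>k<n. (of_bool (Sel (pre \<omega> k)) :: real) * (l k - a))" for n
    by (simp add: sum.distrib[symmetric] algebra_simps)
  have equ: "(\<Sum>k<n. (of_bool (Sel (pre \<omega> k)) :: real) * (of_bool (\<omega> k) - b)) = (\<Sum>k<n. (of_bool (Sel (pre \<omega> k)) :: real) * (of_bool (\<omega> k) - h k)) + (\<Sum>k<n. (of_bool (Sel (pre \<omega> k)) :: real) * (h k - b))" for n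
    by (simp add: sum.distrib[symmetric] algebra_simps)
  have "0 \<le> liminf (\<lambda>n. ereal (((\<Sum>k<n. (of_bool (Sel (pre \<omega> k)) :: real) * (of_bool (\<omega> k) - l k)) + (\<Sum>k<n. (of_bool (Sel (pre \<omega> k)) :: real) * (l k - a))) / sel_count Sel \<omega> n))"
    by (rule liminf_transfer[OF c chl El])
  then show "0 \<le> liminf (\<lambda>n. ereal ((\<Sum>k<n. of_bool (Sel (pre \<omega> k)) * (of_bool (\<omega> k) - lower_fc (\<lambda>_. I) (pre \<omega> k))) / sel_count Sel \<omega> n))"
    unfolding lo eql .
  have "limsup (\<lambda>n. ereal (((\<Sum>k<n. (of_bool (Sel (pre \<omega> k)) :: real) * (of_bool (\<omega> k) - h k)) + (\<Sum>k<n. (of_bool (Sel (pre \<omega> k)) :: real) * (h k - b))) / sel_count Sel \<omega> n)) \<le> 0"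
    by (rule limsup_transfer[OF c chu Eu])
  then show "limsup (\<lambda>n. ereal ((\<Sum>k<n. of_bool (Sel (pre \<omega> k)) * (of_bool (\<omega> k) - upper_fc (\<lambda>_. I) (pre \<omega> k))) / sel_count Sel \<omega> n)) \<le> 0"
    unfolding hi equ .
qed

context tsetup
begin

lemma transfer_all:
  assumes r: "random R \<phi> \<omega>" shows "random R (\<lambda>_. I) \<omega>"
proof (cases R)
  case R_ML then show ?thesis using transfer_ML[OF r[unfolded R_ML]] by (simp only:)
next
  case R_wML then show ?thesis using transfer_wML[OF r[unfolded R_wML]] by (simp only:)
next
  case R_C then show ?thesis using transfer_C[OF r[unfolded R_C]] by (simp only:)
next
  case R_S then show ?thesis using transfer_S[OF r[unfolded R_S]] by (simp only:)
next
  case R_CH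
  have "CH_condition (\<lambda>_. I) \<omega> Sel" if "CH_condition \<phi> \<omega> Sel" for Sel
    by (rule ch_transfer[OF I fs _ that]) (use incl ev in blast)
  then show ?thesis using r R_CH by auto
next
  case R_wCH
  have "CH_condition (\<lambda>_. I) \<omega> Sel" if "CH_condition \<phi> \<omega> Sel" for Sel
    by (rule ch_transfer[OF I fs _ that]) (use incl ev in blast)
  then show ?thesis using r R_wCH by auto
qed

end


lemma I_R_mem: "x \<in> I_R R \<omega> \<Longrightarrow> I \<in> intervals \<Longrightarrow> random R (\<lambda>_. I) \<omega> \<Longrightarrow> x \<in> I"
  unfolding I_R_def by blast

lemma intervalsI: "0 \<le> a \<Longrightarrow> a \<le> b \<Longrightarrow> b \<le> 1 \<Longrightarrow> {a..b} \<in> intervals"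
  unfolding intervals_def by blast

lemma lin_lo: "z < L \<Longrightarrow> L - Q < D \<Longrightarrow> A2 < z \<Longrightarrow> D = (A2 - A1) / 3 \<Longrightarrow> A1 < A2 \<Longrightarrow> A1 + D < (Q::real)"
  by (simp add: field_simps)
lemma lin_hi: "U < z \<Longrightarrow> - (U - Q) < D \<Longrightarrow> z < A2 \<Longrightarrow> D = (A1 - A2) / 3 \<Longrightarrow> A2 < A1 \<Longrightarrow> Q < A1 - (D::real)"
  by (simp add: field_simps)

lemma lin3: "0 < z \<Longrightarrow> A2 < A1 \<Longrightarrow> z < A2 \<Longrightarrow> D = (A1 - A2) / 3 \<Longrightarrow> 0 < A1 - (D::real)"
  by (simp add: field_simps)

theorem proposition5:
  fixes R :: rnotion and \<phi> :: "bool list \<Rightarrow> real set" and \<omega> :: "nat \<Rightarrow> bool"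
  assumes "forecasting_system \<phi>" and "computable_fs \<phi>" and "random R \<phi> \<omega>"
  shows "I_R R \<omega> \<subseteq> I_phi \<phi> \<omega>"
proof
  note fs = assms(1) and rnd = assms(3)
  fix x assume x: "x \<in> I_R R \<omega>"
  have i01: "{0..1::real} \<in> intervals" by (rule intervalsI) simp_all
  have "random R (\<lambda>_. {0..1}) \<omega>"
  proof -
    interpret tsetup "{0..1}" \<phi> "\<lambda>_. True" "\<lambda>_. True" 1 \<omega>
      by unfold_locales (use i01 fs fs_interval[OF fs] in \<open>auto simp: recP_const\<close>)
    show ?thesis by (rule transfer_all[OF rnd])
  qed
  then have x01: "0 \<le> x" "x \<le> 1" using I_R_mem[OF x i01] by auto
  obtain ql gl where gl: "recursive_fn gl" "\<And>d n. gl (prod_encode (enc_sit d, n)) = enc_rat (ql d n)"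
    and qla: "\<And>d n. \<bar>lower_fc \<phi> d - of_rat (ql d n)\<bar> < (1/2) ^ n"
    using assms(2) unfolding computable_fs_def computable_real_def recursive_rat_map_def by blast
  obtain qu gu where gu: "recursive_fn gu" "\<And>d n. gu (prod_encode (enc_sit d, n)) = enc_rat (qu d n)"
    and qua: "\<And>d n. \<bar>upper_fc \<phi> d - of_rat (qu d n)\<bar> < (1/2) ^ n"
    using assms(2) unfolding computable_fs_def computable_real_def recursive_rat_map_def by blast
  have rgl: "rec1 gl" and rgu: "rec1 gu" using gl(1) gu(1) by (simp_all add: recfn_rec1)
  have lo: "liminf (\<lambda>n. ereal (lower_fc \<phi> (pre \<omega> n))) \<le> ereal x"
  proof (rule ccontr)
    assume "\<not> ?thesis"
    then have "ereal x < liminf (\<lambda>n. ereal (lower_fc \<phi> (pre \<omega> n)))" by simp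
    then obtain z where z: "x < z" "ereal z < liminf (\<lambda>n. ereal (lower_fc \<phi> (pre \<omega> n)))"
      using ereal_dense2 by (metis ereal_less(2) less_ereal.simps(1))
    obtain a1 :: rat where a1: "x < of_rat a1" "of_rat a1 < z" using of_rat_dense[OF z(1)] by blast
    obtain a2 :: rat where a2: "of_rat a1 < (of_rat a2 :: real)" "of_rat a2 < z" using of_rat_dense[OF a1(2)] by blast
    have "eventually (\<lambda>n. ereal z < ereal (lower_fc \<phi> (pre \<omega> n))) sequentially"
      using less_LiminfD[OF z(2)] .
    then obtain N0 where N0: "\<And>n. N0 \<le> n \<Longrightarrow> z < lower_fc \<phi> (pre \<omega> n)"
      unfolding eventually_sequentially by auto
    define \<delta> where "\<delta> = (a2 - a1) / 3"
    have dr: "(of_rat \<delta> :: real) = (of_rat a2 - of_rat a1) / 3" by (simp add: \<delta>_def of_rat_divide of_rat_diff)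
    have d0: "(0::real) < of_rat \<delta>" unfolding dr using a2(1) by simp
    obtain k where k: "(1/2::real) ^ k < of_rat \<delta>" using real_arch_pow_inv[OF d0, of "1/2"] by auto
    have apos: "0 < a1 + \<delta>"
    proof -
      have "(0::real) < of_rat a1 + of_rat \<delta>" using x01 a1 d0 by linarith
      then show ?thesis by (simp add: of_rat_add[symmetric] zero_less_of_rat_iff del: of_rat_add)
    qed
    obtain Q0 where Q0: "recP Q0" "\<And>q. Q0 (enc_rat q) \<longleftrightarrow> a1 + \<delta> < q" using rat_gt_code[OF apos] by blast
    define P where "P s \<longleftrightarrow> a1 + \<delta> < ql s k" for s
    define Qc where "Qc c \<longleftrightarrow> Q0 (gl (prod_encode (c, k)))" for c
    define I where "I = {of_rat a1..1::real}"
    have N1: "z < lower_fc \<phi> (pre \<omega> N0)" using N0 by simp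
    have a11: "of_rat a1 \<le> (1::real)" using N1 fs_interval[OF fs, of "pre \<omega> N0"] a1 by linarith
    interpret tsetup I \<phi> P Qc "Suc N0" \<omega>
    proof
      show "I \<in> intervals" unfolding I_def by (rule intervalsI) (use a1 x01 a11 in linarith)+
      show "forecasting_system \<phi>" by (rule fs)
      show "recP Qc" unfolding Qc_def by (rule recP_comp[OF Q0(1) rec1_comp[OF rgl rec1_pair[OF rec1_id rec1_const]]])
      show "Qc (enc_sit s) \<longleftrightarrow> P s" for s by (simp add: Qc_def P_def gl(2) Q0(2))
      show "0 < Suc N0" by simp
    next
      fix s assume "P s"
      then have "of_rat (a1 + \<delta>) < (of_rat (ql s k) :: real)" unfolding P_def by (simp add: of_rat_less)
      then have "of_rat a1 + of_rat \<delta> < (of_rat (ql s k) :: real)" by (simp add: of_rat_add)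
      moreover have "\<bar>lower_fc \<phi> s - of_rat (ql s k)\<bar> < of_rat \<delta>" using qla[of s k] k by linarith
      ultimately have "of_rat a1 < lower_fc \<phi> s" by linarith
      then show "\<phi> s \<subseteq> I" using fs_interval[OF fs, of s] unfolding I_def by auto
    next
      fix n assume n: "Suc N0 \<le> n"
      have h1: "z < lower_fc \<phi> (pre \<omega> n)" using N0 n by simp
      have "\<bar>lower_fc \<phi> (pre \<omega> n) - of_rat (ql (pre \<omega> n) k)\<bar> < of_rat \<delta>" using qla[of "pre \<omega> n" k] k by linarith
      then have h2: "lower_fc \<phi> (pre \<omega> n) - of_rat (ql (pre \<omega> n) k) < of_rat \<delta>" by (rule le_less_trans[OF abs_ge_self])
      have "of_rat a1 + of_rat \<delta> < (of_rat (ql (pre \<omega> n) k) :: real)" by (rule lin_lo[OF h1 h2 a2(2) dr a2(1)])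
      then have "of_rat (a1 + \<delta>) < (of_rat (ql (pre \<omega> n) k) :: real)" by (simp add: of_rat_add)
      then show "P (pre \<omega> n)" unfolding P_def by (simp add: of_rat_less)
    qed
    have "x \<in> I" by (rule I_R_mem[OF x I transfer_all[OF rnd]])
    then show False using a1 unfolding I_def by simp
  qed
  have hi: "ereal x \<le> limsup (\<lambda>n. ereal (upper_fc \<phi> (pre \<omega> n)))"
  proof (rule ccontr)
    assume "\<not> ?thesis"
    then have "limsup (\<lambda>n. ereal (upper_fc \<phi> (pre \<omega> n))) < ereal x" by simp
    then obtain z where z: "z < x" "limsup (\<lambda>n. ereal (upper_fc \<phi> (pre \<omega> n))) < ereal z"
      using ereal_dense2 by (metis ereal_less(2) less_ereal.simps(1))
    obtain a1 :: rat where a1: "of_rat a1 < x" "z < of_rat a1" using of_rat_dense[OF z(1)] by blast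
    obtain a2 :: rat where a2: "(of_rat a2 :: real) < of_rat a1" "z < of_rat a2" using of_rat_dense[OF a1(2)] by blast
    have "eventually (\<lambda>n. ereal (upper_fc \<phi> (pre \<omega> n)) < ereal z) sequentially"
      using Limsup_lessD[OF z(2)] .
    then obtain N0 where N0: "\<And>n. N0 \<le> n \<Longrightarrow> upper_fc \<phi> (pre \<omega> n) < z"
      unfolding eventually_sequentially by auto
    define \<delta> where "\<delta> = (a1 - a2) / 3"
    have dr: "(of_rat \<delta> :: real) = (of_rat a1 - of_rat a2) / 3" by (simp add: \<delta>_def of_rat_divide of_rat_diff)
    have d0: "(0::real) < of_rat \<delta>" unfolding dr using a2(1) by simp
    obtain k where k: "(1/2::real) ^ k < of_rat \<delta>" using real_arch_pow_inv[OF d0, of "1/2"] by auto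
    have N1: "upper_fc \<phi> (pre \<omega> N0) < z" using N0 by simp
    have z0: "0 < z" using N1 fs_interval[OF fs, of "pre \<omega> N0"] by linarith
    have apos: "0 < a1 - \<delta>"
    proof -
      have "(0::real) < of_rat a1 - of_rat \<delta>" by (rule lin3[OF z0 a2(1) a2(2) dr])
      then show ?thesis by (simp add: of_rat_diff[symmetric] zero_less_of_rat_iff del: of_rat_diff)
    qed
    obtain Q0 where Q0: "recP Q0" "\<And>q. Q0 (enc_rat q) \<longleftrightarrow> q < a1 - \<delta>" using rat_lt_code[OF apos] by blast
    define P where "P s \<longleftrightarrow> qu s k < a1 - \<delta>" for s
    define Qc where "Qc c \<longleftrightarrow> Q0 (gu (prod_encode (c, k)))" for c
    define I where "I = {0..of_rat a1::real}"
    interpret tsetup I \<phi> P Qc "Suc N0" \<omega>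
    proof
      show "I \<in> intervals" unfolding I_def by (rule intervalsI) (use a1 a2 x01 z0 in linarith)+
      show "forecasting_system \<phi>" by (rule fs)
      show "recP Qc" unfolding Qc_def by (rule recP_comp[OF Q0(1) rec1_comp[OF rgu rec1_pair[OF rec1_id rec1_const]]])
      show "Qc (enc_sit s) \<longleftrightarrow> P s" for s by (simp add: Qc_def P_def gu(2) Q0(2))
      show "0 < Suc N0" by simp
    next
      fix s assume "P s"
      then have "(of_rat (qu s k) :: real) < of_rat (a1 - \<delta>)" unfolding P_def by (simp add: of_rat_less)
      then have "(of_rat (qu s k) :: real) < of_rat a1 - of_rat \<delta>" by (simp add: of_rat_diff)
      moreover have "\<bar>upper_fc \<phi> s - of_rat (qu s k)\<bar> < of_rat \<delta>" using qua[of s k] k by linarith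
      ultimately have "upper_fc \<phi> s < of_rat a1" by linarith
      then show "\<phi> s \<subseteq> I" using fs_interval[OF fs, of s] unfolding I_def by auto
    next
      fix n assume n: "Suc N0 \<le> n"
      have h1: "upper_fc \<phi> (pre \<omega> n) < z" using N0 n by simp
      have "\<bar>upper_fc \<phi> (pre \<omega> n) - of_rat (qu (pre \<omega> n) k)\<bar> < of_rat \<delta>" using qua[of "pre \<omega> n" k] k by linarith
      then have h2: "- (upper_fc \<phi> (pre \<omega> n) - of_rat (qu (pre \<omega> n) k)) < of_rat \<delta>" by (rule le_less_trans[OF abs_ge_minus_self])
      have "(of_rat (qu (pre \<omega> n) k) :: real) < of_rat a1 - of_rat \<delta>" by (rule lin_hi[OF h1 h2 a2(2) dr a2(1)])
      then have "(of_rat (qu (pre \<omega> n) k) :: real) < of_rat (a1 - \<delta>)" by (simp add: of_rat_diff)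
      then show "P (pre \<omega> n)" unfolding P_def by (simp add: of_rat_less)
    qed
    have "x \<in> I" by (rule I_R_mem[OF x I transfer_all[OF rnd]])
    then show False using a1 unfolding I_def by simp
  qed
  show "x \<in> I_phi \<phi> \<omega>" unfolding I_phi_def using lo hi by simp
qed


end
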